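(* Let $n\in\mathbb N$, let $A$ be a Young function satisfying (C1), (C2), (C3), let $B$ be the associated function, let $\varphi$ be a gauge function and let $\psi$ be the associated gauge function. Then the function $\Xi_{\psi,B}(r)=r\,\Theta_\psi\big(\Theta_{B^{-1}}(1/r)^+\big)$, $r>0$, is non-decreasing on $(0,\infty)$.
   Context: A gauge function is a function $\varphi\colon[0,\infty)\to[0,\infty)$ that is increasing, continuous and vanishes only at $0$, and (standing assumption) such that $r\mapsto\varphi(r)/r^n$ is non-increasing on $(0,\infty)$. A Young function is a non-trivial convex $A\colon[0,\infty)\to[0,\infty]$ with $A(0)=0$; $\widetilde A(t)=\sup_{\tau\ge0}(\tau t-A(\tau))$. Conditions: (C1) if $n=1$, $\lim_{t\to\infty}t/A(t)=0$; if $n\ge2$, $\int^\infty (t/A(t))^{1/(n-1)}dt<\infty$. (C2) $0<A(t)<\infty$ for $t>0$. (C3) if $n=1$, $\lim_{t\to0^+}t/A(t)=\infty$; if $n\ge2$, $\int_0(t/A(t))^{1/(n-1)}dt=\infty$. $B=A$ if $n=1$; for $n\ge2$, $B$ is the Young conjugate of $t\mapsto t^{n'}\int_t^\infty\widetilde A(s)s^{-1-n'}ds$, $n'=n/(n-1)$. $J(0)=0$, $J(s)=sB^{-1}(\varphi(s)/s^n)$ for $s>0$, $\psi(r)=\varphi(J^{-1}(r))$. For $h\colon(0,\infty)\to(0,\infty)$, $\Theta_h(r)=\sup_{t>0}h(rt)/h(t)$ for $r>0$, and $\Theta_h(a^+)=\lim_{\rho\to a^+}\Theta_h(\rho)$.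 *)

theory Defs
  imports "HOL-Analysis.Analysis"
begin

text \<open>Young function (real-valued on [0,inf); values of A off [0,inf) are irrelevant).
  Finite-valuedness is harmless since condition (C2) is assumed anyway.\<close>
definition young_fun :: "(real \<Rightarrow> real) \<Rightarrow> bool" where
  "young_fun A \<longleftrightarrow> convex_on {0..} A \<and> A 0 = 0 \<and> (\<forall>t\<ge>0. 0 \<le> A t) \<and> (\<exists>t>0. A t \<noteq> 0)"

definition young_conj :: "(real \<Rightarrow> ereal) \<Rightarrow> real \<Rightarrow> ereal" where
  "young_conj f t = (SUP \<tau>\<in>{0..}. ereal (\<tau> * t) - f \<tau>)"

definition cond_C1 :: "nat \<Rightarrow> (real \<Rightarrow> real) \<Rightarrow> bool" where
  "cond_C1 n A \<longleftrightarrow>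
     (if n = 1 then ((\<lambda>t. t / A t) \<longlongrightarrow> 0) at_top
      else (\<integral>\<^sup>+ t\<in>{1..}. ennreal ((t / A t) powr (1 / (real n - 1))) \<partial>lborel) < \<infinity>)"

definition cond_C2 :: "(real \<Rightarrow> real) \<Rightarrow> bool" where
  "cond_C2 A \<longleftrightarrow> (\<forall>t>0. 0 < A t)"

definition cond_C3 :: "nat \<Rightarrow> (real \<Rightarrow> real) \<Rightarrow> bool" where
  "cond_C3 n A \<longleftrightarrow>
     (if n = 1 then filterlim (\<lambda>t. t / A t) at_top (at_right 0)
      else (\<integral>\<^sup>+ t\<in>{0<..<1}. ennreal ((t / A t) powr (1 / (real n - 1))) \<partial>lborel) = \<infinity>)"

definition aux_E :: "nat \<Rightarrow> (real \<Rightarrow> real) \<Rightarrow> real \<Rightarrow> ereal" where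
  "aux_E n A t = (let n' = real n / (real n - 1) in
     ereal (t powr n') *
     enn2ereal (\<integral>\<^sup>+ s\<in>{t<..}. e2ennreal (young_conj (\<lambda>\<tau>. ereal (A \<tau>)) s)
                                  * ennreal (s powr (-1 - n')) \<partial>lborel))"

definition assoc_B :: "nat \<Rightarrow> (real \<Rightarrow> real) \<Rightarrow> real \<Rightarrow> ereal" where
  "assoc_B n A = (if n = 1 then (\<lambda>t. ereal (A t)) else young_conj (aux_E n A))"

definition young_inv :: "(real \<Rightarrow> ereal) \<Rightarrow> real \<Rightarrow> real" where
  "young_inv f s = Sup {t. 0 \<le> t \<and> f t \<le> ereal s}"

definition gauge_fun :: "nat \<Rightarrow> (real \<Rightarrow> real) \<Rightarrow> bool" where
  "gauge_fun n \<phi> \<longleftrightarrow> strict_mono_on {0..} \<phi> \<and> continuous_on {0..} \<phi> \<and> \<phi> 0 = 0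
     \<and> (\<forall>r>0. 0 < \<phi> r) \<and> antimono_on {0<..} (\<lambda>r. \<phi> r / r ^ n)"

definition J_fun :: "nat \<Rightarrow> (real \<Rightarrow> real) \<Rightarrow> (real \<Rightarrow> real) \<Rightarrow> real \<Rightarrow> real" where
  "J_fun n A \<phi> s = (if s = 0 then 0 else s * young_inv (assoc_B n A) (\<phi> s / s ^ n))"

definition assoc_psi :: "nat \<Rightarrow> (real \<Rightarrow> real) \<Rightarrow> (real \<Rightarrow> real) \<Rightarrow> real \<Rightarrow> real" where
  "assoc_psi n A \<phi> r = \<phi> (the_inv_into {0..} (J_fun n A \<phi>) r)"

definition Theta :: "(real \<Rightarrow> real) \<Rightarrow> real \<Rightarrow> ereal" where
  "Theta h r = (SUP t\<in>{0<..}. ereal (h (r * t) / h t))"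

definition Theta_right :: "(real \<Rightarrow> real) \<Rightarrow> real \<Rightarrow> ereal" where
  "Theta_right h a = Lim (at_right a) (Theta h)"

definition Xi :: "nat \<Rightarrow> (real \<Rightarrow> real) \<Rightarrow> (real \<Rightarrow> real) \<Rightarrow> real \<Rightarrow> ereal" where
  "Xi n A \<phi> r = ereal r * Theta_right (assoc_psi n A \<phi>)
                   (real_of_ereal (Theta (young_inv (assoc_B n A)) (1 / r)))"

end

theory Submission
  imports Defs
begin


lemma theta_mono:
  fixes h :: "real \<Rightarrow> real"
  assumes pos: "\<And>t. t > 0 \<Longrightarrow> h t > 0" and mono: "\<And>x y. 0 < x \<Longrightarrow> x \<le> y \<Longrightarrow> h x \<le> h y"
    and "0 < \<rho>1" "\<rho>1 \<le> \<rho>2"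
  shows "Theta h \<rho>1 \<le> Theta h \<rho>2"
  unfolding Theta_def
proof (rule SUP_mono)
  fix t :: real assume t: "t \<in> {0<..}"
  have "h (\<rho>1 * t) \<le> h (\<rho>2 * t)" using assms t by (intro mono) (auto intro: mult_right_mono)
  then have "h (\<rho>1 * t) / h t \<le> h (\<rho>2 * t) / h t" using pos[of t] t by (simp add: divide_right_mono)
  then show "\<exists>m\<in>{0<..}. ereal (h (\<rho>1 * t) / h t) \<le> ereal (h (\<rho>2 * m) / h m)" using t by (intro bexI[of _ t]) auto
qed

lemma theta_ge:
  fixes h :: "real \<Rightarrow> real"
  assumes "t > 0"
  shows "ereal (h (\<rho> * t) / h t) \<le> Theta h \<rho>"
  unfolding Theta_def using assms by (auto intro: SUP_upper)

lemma theta_pos: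
  fixes h :: "real \<Rightarrow> real"
  assumes pos: "\<And>t. t > 0 \<Longrightarrow> h t > 0" and "\<rho> > 0"
  shows "Theta h \<rho> > 0"
proof -
  have "0 < ereal (h (\<rho> * 1) / h 1)" using pos[of 1] pos[of \<rho>] assms by simp
  also have "\<dots> \<le> Theta h \<rho>" by (rule theta_ge) simp
  finally show ?thesis .
qed

lemma theta_g_bound:
  fixes g :: "real \<Rightarrow> real" and n :: nat
  assumes pos: "\<And>t. t > 0 \<Longrightarrow> g t > 0" and mono: "\<And>x y. 0 < x \<Longrightarrow> x \<le> y \<Longrightarrow> g x \<le> g y"
    and sc: "\<And>l w. 1 \<le> l \<Longrightarrow> 0 < w \<Longrightarrow> g (l * w) \<le> l powr (1 / real n) * g w"
    and "\<rho> > 0"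
  shows "Theta g \<rho> \<le> ereal (max 1 (\<rho> powr (1 / real n)))"
  unfolding Theta_def
proof (rule SUP_least)
  fix t :: real assume t: "t \<in> {0<..}"
  have gt: "g t > 0" using pos t by auto
  have "g (\<rho> * t) \<le> max 1 (\<rho> powr (1 / real n)) * g t"
  proof (cases "\<rho> \<le> 1")
    case True
    then have "g (\<rho> * t) \<le> g t" using t assms by (intro mono) (auto simp: mult_le_cancel_right1)
    also have "\<dots> \<le> max 1 (\<rho> powr (1 / real n)) * g t" using gt by (simp add: mult_le_cancel_right1)
    finally show ?thesis .
  next
    case False
    then have "g (\<rho> * t) \<le> \<rho> powr (1 / real n) * g t" using t by (intro sc) auto
    also have "\<dots> \<le> max 1 (\<rho> powr (1 / real n)) * g t" using gt by (intro mult_right_mono) auto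
    finally show ?thesis .
  qed
  then have "g (\<rho> * t) / g t \<le> max 1 (\<rho> powr (1 / real n))"
    using gt by (simp add: divide_le_eq)
  then show "ereal (g (\<rho> * t) / g t) \<le> ereal (max 1 (\<rho> powr (1 / real n)))"
    unfolding ereal_less_eq(3) .
qed

lemma theta_g_sub:
  fixes g :: "real \<Rightarrow> real" and n :: nat
  assumes pos: "\<And>t. t > 0 \<Longrightarrow> g t > 0"
    and sc: "\<And>l w. 1 \<le> l \<Longrightarrow> 0 < w \<Longrightarrow> g (l * w) \<le> l powr (1 / real n) * g w"
    and "0 < r" "r \<le> s"
  shows "Theta g (1/r) \<le> ereal ((s/r) powr (1 / real n)) * Theta g (1/s)"
  unfolding Theta_def[of g "1/r"]
proof (rule SUP_least)
  fix t :: real assume t: "t \<in> {0<..}"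
  have gt: "g t > 0" using pos t by auto
  have eq: "1 / r * t = (s/r) * (1/s * t)" using assms by (simp add: field_simps)
  have "g (1/r * t) \<le> (s/r) powr (1 / real n) * g (1/s * t)"
    unfolding eq using assms t by (intro sc) auto
  then have "g (1/r * t) / g t \<le> (s/r) powr (1 / real n) * (g (1/s * t) / g t)"
    using gt by (simp add: divide_right_mono)
  then have "ereal (g (1/r * t) / g t) \<le> ereal ((s/r) powr (1 / real n)) * ereal (g (1/s * t) / g t)"
    by simp
  also have "\<dots> \<le> ereal ((s/r) powr (1 / real n)) * Theta g (1/s)"
    by (intro ereal_mult_left_mono theta_ge) (use t in auto)
  finally show "ereal (g (1/r * t) / g t) \<le> ereal ((s/r) powr (1 / real n)) * Theta g (1/s)" .
qed

lemma theta_psi_scale: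
  fixes \<psi> :: "real \<Rightarrow> real" and n :: nat
  assumes pos: "\<And>t. t > 0 \<Longrightarrow> \<psi> t > 0"
    and sc: "\<And>l y. 1 \<le> l \<Longrightarrow> 0 < y \<Longrightarrow> \<psi> (l powr (1 / real n) * y) \<le> l * \<psi> y"
    and "1 \<le> l" "0 < \<rho>"
  shows "Theta \<psi> (l powr (1 / real n) * \<rho>) \<le> ereal l * Theta \<psi> \<rho>"
  unfolding Theta_def[of \<psi> "l powr (1 / real n) * \<rho>"]
proof (rule SUP_least)
  fix t :: real assume t: "t \<in> {0<..}"
  have gt: "\<psi> t > 0" using pos t by auto
  have "\<psi> (l powr (1 / real n) * \<rho> * t) \<le> l * \<psi> (\<rho> * t)"
    using sc[of l "\<rho> * t"] assms t by (simp add: mult.assoc)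
  then have "\<psi> (l powr (1 / real n) * \<rho> * t) / \<psi> t \<le> l * (\<psi> (\<rho> * t) / \<psi> t)"
    using gt by (simp add: divide_right_mono)
  then have "ereal (\<psi> (l powr (1 / real n) * \<rho> * t) / \<psi> t) \<le> ereal l * ereal (\<psi> (\<rho> * t) / \<psi> t)"
    by simp
  also have "\<dots> \<le> ereal l * Theta \<psi> \<rho>"
    by (intro ereal_mult_left_mono theta_ge) (use t assms in auto)
  finally show "ereal (\<psi> (l powr (1 / real n) * \<rho> * t) / \<psi> t) \<le> ereal l * Theta \<psi> \<rho>" .
qed

lemma mono_right_lim:
  fixes F :: "real \<Rightarrow> ereal"
  assumes mono: "\<And>x y. 0 < x \<Longrightarrow> x \<le> y \<Longrightarrow> F x \<le> F y" and "a \<ge> 0"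
  shows "(F \<longlongrightarrow> Inf (F ` {a<..})) (at_right a)"
proof (rule order_tendstoI)
  fix y assume "y < Inf (F ` {a<..})"
  then have "\<forall>x\<in>{a<..}. y < F x" by (auto dest: less_INF_D)
  then show "eventually (\<lambda>x. y < F x) (at_right a)"
    unfolding eventually_at_right_field by (intro exI[of _ "a+1"]) auto
next
  fix y assume "Inf (F ` {a<..}) < y"
  then obtain x where x: "x > a" "F x < y" by (auto simp: Inf_less_iff)
  show "eventually (\<lambda>x. F x < y) (at_right a)"
    unfolding eventually_at_right_field
  proof (intro exI[of _ x] conjI allI impI)
    show "a < x" by fact
    fix z assume "a < z" "z < x"
    then have "F z \<le> F x" using assms by (intro mono) auto
    then show "F z < y" using x by simp
  qed
qed

lemma Theta_right_eq:
  fixes h :: "real \<Rightarrow> real"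
  assumes pos: "\<And>t. t > 0 \<Longrightarrow> h t > 0" and mono: "\<And>x y. 0 < x \<Longrightarrow> x \<le> y \<Longrightarrow> h x \<le> h y"
    and "a \<ge> 0"
  shows "Theta_right h a = Inf (Theta h ` {a<..})"
  unfolding Theta_right_def
  by (rule tendsto_Lim) (auto intro!: mono_right_lim theta_mono assms)



lemma final_step:
  fixes g \<psi> :: "real \<Rightarrow> real" and n :: nat
  assumes n: "n \<ge> 1"
    and gpos: "\<And>t. t > 0 \<Longrightarrow> g t > 0" and gmono: "\<And>x y. 0 < x \<Longrightarrow> x \<le> y \<Longrightarrow> g x \<le> g y"
    and gsc: "\<And>l w. 1 \<le> l \<Longrightarrow> 0 < w \<Longrightarrow> g (l * w) \<le> l powr (1 / real n) * g w"
    and ppos: "\<And>t. t > 0 \<Longrightarrow> \<psi> t > 0" and pmono: "\<And>x y. 0 < x \<Longrightarrow> x \<le> y \<Longrightarrow> \<psi> x \<le> \<psi> y"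
    and psc: "\<And>l y. 1 \<le> l \<Longrightarrow> 0 < y \<Longrightarrow> \<psi> (l powr (1 / real n) * y) \<le> l * \<psi> y"
  shows "mono_on {0<..} (\<lambda>r. ereal r * Theta_right \<psi> (real_of_ereal (Theta g (1/r))))"
proof (rule mono_onI)
  fix r s :: real assume rs: "r \<in> {0<..}" "s \<in> {0<..}" "r \<le> s"
  define l where "l = s / r"
  have l1: "1 \<le> l" using rs by (simp add: l_def)
  define c where "c = l powr (1 / real n)"
  have c0: "c > 0" using l1 by (simp add: c_def)
  have fin: "0 < Theta g x \<and> Theta g x < \<infinity>" if "x > 0" for x
  proof
    show "0 < Theta g x" using theta_pos[OF gpos that] .
    have "Theta g x \<le> ereal (max 1 (x powr (1 / real n)))" using theta_g_bound[OF gpos gmono gsc that] .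
    also have "\<dots> < \<infinity>" by (simp del: ereal_max)
    finally show "Theta g x < \<infinity>" .
  qed
  define a where "a = real_of_ereal (Theta g (1/r))"
  define b where "b = real_of_ereal (Theta g (1/s))"
  have ha: "0 < Theta g (1/r)" "Theta g (1/r) < \<infinity>"
    using fin[of "1/r"] rs by auto
  then have ea: "Theta g (1/r) = ereal a" unfolding a_def by (cases "Theta g (1/r)") auto
  have a0: "a > 0" using ha(1) unfolding ea by simp
  have hb: "0 < Theta g (1/s)" "Theta g (1/s) < \<infinity>"
    using fin[of "1/s"] rs by auto
  then have eb: "Theta g (1/s) = ereal b" unfolding b_def by (cases "Theta g (1/s)") auto
  have b0: "b > 0" using hb(1) unfolding eb by simp
  have "ereal a \<le> ereal c * ereal b"
    using theta_g_sub[OF gpos gsc, of r s] rs unfolding ea eb c_def l_def by auto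
  then have acb: "a \<le> c * b" by simp
  define L where "L x = Inf (Theta \<psi> ` {x<..})" for x
  have TR: "\<And>x. x \<ge> 0 \<Longrightarrow> Theta_right \<psi> x = L x"
    unfolding L_def by (rule Theta_right_eq[OF ppos pmono]) auto
  have L1: "L a \<le> L (c * b)"
    unfolding L_def by (rule Inf_superset_mono) (use acb in auto)
  have L2: "ereal (r / s) * L (c * b) \<le> Theta \<psi> \<rho>" if "\<rho> > b" for \<rho>
  proof -
    have "L (c * b) \<le> Theta \<psi> (c * \<rho>)"
      unfolding L_def by (rule Inf_lower) (use that c0 in auto)
    also have "\<dots> \<le> ereal l * Theta \<psi> \<rho>"
      unfolding c_def by (rule theta_psi_scale[OF ppos psc l1]) (use that b0 in auto)
    finally have "ereal (r / s) * L (c * b) \<le> ereal (r / s) * (ereal l * Theta \<psi> \<rho>)"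
      using rs by (intro ereal_mult_left_mono) auto
    also have "\<dots> = Theta \<psi> \<rho>"
    proof -
      have one: "ereal (r / s) * ereal l = 1" using rs by (simp add: l_def one_ereal_def)
      show ?thesis by (metis mult.assoc one mult_1)
    qed
    finally show ?thesis .
  qed
  have "ereal (r / s) * L (c * b) \<le> L b"
    unfolding L_def[of b] by (rule Inf_greatest) (use L2 in auto)
  then have "ereal s * (ereal (r / s) * L (c * b)) \<le> ereal s * L b"
    using rs by (intro ereal_mult_left_mono) auto
  then have "ereal r * L (c * b) \<le> ereal s * L b"
  proof -
    have one: "ereal s * ereal (r / s) = ereal r" using rs by simp
    show ?thesis using \<open>ereal s * (ereal (r / s) * L (c * b)) \<le> ereal s * L b\<close>
      by (metis mult.assoc one)
  qed
  moreover have "ereal r * L a \<le> ereal r * L (c * b)"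
    using rs L1 by (intro ereal_mult_left_mono) auto
  ultimately have "ereal r * L a \<le> ereal s * L b" by order
  then show "ereal r * Theta_right \<psi> (real_of_ereal (Theta g (1/r))) \<le> ereal s * Theta_right \<psi> (real_of_ereal (Theta g (1/s)))"
    using TR[of a] TR[of b] a0 b0 unfolding a_def b_def by simp
qed



lemma root_pow:
  fixes x :: real assumes "x \<ge> 0" "n \<ge> 1"
  shows "(x ^ n) powr (1 / real n) = x"
proof (cases "x = 0")
  case True then show ?thesis using assms by simp
next
  case False
  then have "x > 0" using assms by simp
  then have "(x ^ n) powr (1 / real n) = (x powr real n) powr (1 / real n)" by (simp add: powr_realpow)
  also have "\<dots> = x" using assms \<open>x > 0\<close> by (simp add: powr_powr)
  finally show ?thesis .
qed

locale gJ =
  fixes n :: nat and g \<phi> :: "real \<Rightarrow> real"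
  assumes n: "n \<ge> 1"
    and gpos: "\<And>t. t > 0 \<Longrightarrow> g t > 0"
    and gmono: "\<And>x y. 0 < x \<Longrightarrow> x \<le> y \<Longrightarrow> g x \<le> g y"
    and gsc: "\<And>l w. 1 \<le> l \<Longrightarrow> 0 < w \<Longrightarrow> g (l * w) \<le> l powr (1 / real n) * g w"
    and gcont: "continuous_on {0<..} g"
    and glow: "\<And>K. K > 0 \<Longrightarrow> \<exists>w0>0. \<forall>w. 0 < w \<and> w < w0 \<longrightarrow> K * w powr (1 / real n) \<le> g w"
    and gauge: "gauge_fun n \<phi>"
begin

definition J :: "real \<Rightarrow> real" where "J s = (if s = 0 then 0 else s * g (\<phi> s / s ^ n))"

definition u :: "real \<Rightarrow> real" where "u s = \<phi> s / s ^ n"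

lemma phi_pos: "s > 0 \<Longrightarrow> \<phi> s > 0" using gauge by (auto simp: gauge_fun_def)
lemma phi_0: "\<phi> 0 = 0" using gauge by (auto simp: gauge_fun_def)
lemma phi_smono: "0 \<le> x \<Longrightarrow> x < y \<Longrightarrow> \<phi> x < \<phi> y"
  using gauge unfolding gauge_fun_def strict_mono_on_def by auto
lemma phi_cont: "continuous_on {0..} \<phi>" using gauge by (auto simp: gauge_fun_def)
lemma u_pos: "s > 0 \<Longrightarrow> u s > 0" using phi_pos by (simp add: u_def)
lemma u_anti: "0 < x \<Longrightarrow> x \<le> y \<Longrightarrow> u y \<le> u x"
  using gauge unfolding gauge_fun_def monotone_on_def u_def by auto

lemma J_pos_eq: "s > 0 \<Longrightarrow> J s = s * g (u s)" by (simp add: J_def u_def)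

lemma gsc2: assumes "0 < w" "w \<le> w'" shows "g w' \<le> (w' / w) powr (1 / real n) * g w"
  using gsc[of "w'/w" w] assms by (simp add: field_simps)

lemma key_id:
  assumes "s > 0" "s' > 0"
  shows "s' * (u s' / u s) powr (1 / real n) = s * (\<phi> s' / \<phi> s) powr (1 / real n)"
proof -
  have eq: "u s' / u s = (\<phi> s' / \<phi> s) * (s / s') ^ n"
    using assms phi_pos[of s] by (simp add: u_def field_simps power_divide)
  have "(u s' / u s) powr (1 / real n) = ((\<phi> s' / \<phi> s) * (s / s') ^ n) powr (1 / real n)"
    by (simp only: eq)
  also have "\<dots> = (\<phi> s' / \<phi> s) powr (1 / real n) * ((s / s') ^ n) powr (1 / real n)"
    by (rule powr_mult)
  finally have "(u s' / u s) powr (1 / real n) = (\<phi> s' / \<phi> s) powr (1 / real n) * ((s / s') ^ n) powr (1 / real n)" .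
  also have "((s / s') ^ n) powr (1 / real n) = s / s'" using assms n by (intro root_pow) auto
  finally show ?thesis using assms by simp
qed

lemma J_grow:
  assumes "0 < s" "s \<le> s'"
  shows "(\<phi> s' / \<phi> s) powr (1 / real n) * J s \<le> J s'"
proof -
  have s': "s' > 0" using assms by simp
  have uu: "0 < u s'" "u s' \<le> u s" using u_pos[OF s'] u_anti[OF assms] by auto
  have "g (u s) \<le> (u s / u s') powr (1 / real n) * g (u s')" by (rule gsc2) (use uu in auto)
  then have "(u s' / u s) powr (1 / real n) * g (u s) \<le> (u s' / u s) powr (1 / real n) * ((u s / u s') powr (1 / real n) * g (u s'))"
    by (intro mult_left_mono) auto
  also have "\<dots> = g (u s')"
  proof -
    have "(u s' / u s) powr (1 / real n) * (u s / u s') powr (1 / real n) = 1"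
      using uu by (simp add: powr_mult[symmetric])
    then show ?thesis by (metis mult.assoc mult_1)
  qed
  finally have *: "(u s' / u s) powr (1 / real n) * g (u s) \<le> g (u s')" .
  have "(\<phi> s' / \<phi> s) powr (1 / real n) * J s = s' * ((u s' / u s) powr (1 / real n) * g (u s))"
    using key_id[OF assms(1) s'] assms by (simp add: J_pos_eq mult.assoc[symmetric] mult.commute)
  also have "\<dots> \<le> s' * g (u s')" using * s' by (intro mult_left_mono) auto
  also have "\<dots> = J s'" using s' by (simp add: J_pos_eq)
  finally show ?thesis .
qed

lemma J_0: "J 0 = 0" by (simp add: J_def)
lemma J_pos: "s > 0 \<Longrightarrow> J s > 0" using gpos u_pos by (simp add: J_pos_eq)

lemma J_smono: assumes "0 \<le> s" "s < s'" shows "J s < J s'"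
proof (cases "s = 0")
  case True then show ?thesis using J_pos assms by (simp add: J_0)
next
  case False
  then have s: "s > 0" using assms by simp
  have ph: "\<phi> s < \<phi> s'" "\<phi> s > 0" using phi_smono assms phi_pos s by auto
  have "1 < (\<phi> s' / \<phi> s) powr (1 / real n)"
    using ph n by (intro gr_one_powr) auto
  then have "J s < (\<phi> s' / \<phi> s) powr (1 / real n) * J s" using J_pos[OF s] by simp
  also have "\<dots> \<le> J s'" using J_grow s assms by simp
  finally show ?thesis .
qed

lemma J_cont: "continuous_on {0<..} J"
proof -
  have "continuous_on {0<..} (\<lambda>s. s * g (\<phi> s / s ^ n))"
  proof -
    have c1: "continuous_on {0<..} \<phi>" using phi_cont by (rule continuous_on_subset) auto
    have c2: "continuous_on {0<..} (\<lambda>s. \<phi> s / s ^ n)"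
      by (intro continuous_on_divide c1 continuous_on_power continuous_on_id) auto
    have c3: "continuous_on {0<..} (\<lambda>s. g (\<phi> s / s ^ n))"
      by (rule continuous_on_compose2[OF gcont c2]) (use u_pos in \<open>auto simp: u_def\<close>)
    show ?thesis by (intro continuous_on_mult continuous_on_id c3)
  qed
  then show ?thesis by (rule continuous_on_cong[THEN iffD1, rotated 2]) (auto simp: J_def)
qed

lemma J_small: assumes "y > 0" shows "\<exists>e>0. J e < y"
proof -
  define C where "C = g (\<phi> 1) / \<phi> 1 powr (1 / real n)"
  have C: "C > 0" using gpos phi_pos[of 1] by (simp add: C_def)
  have bound: "J s \<le> C * \<phi> s powr (1 / real n)" if "0 < s" "s \<le> 1" for s
  proof -
    have "J 1 \<ge> (\<phi> 1 / \<phi> s) powr (1 / real n) * J s" using J_grow that by simp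
    moreover have "J 1 = g (\<phi> 1)" by (simp add: J_def)
    ultimately have "(\<phi> 1 / \<phi> s) powr (1 / real n) * J s \<le> g (\<phi> 1)" by simp
    moreover have "(\<phi> 1 / \<phi> s) powr (1 / real n) = \<phi> 1 powr (1 / real n) / \<phi> s powr (1 / real n)"
      using phi_pos that by (simp add: powr_divide)
    ultimately show ?thesis using phi_pos[of 1] phi_pos[OF that(1)]
      by (simp add: C_def field_simps)
  qed
  have "(\<phi> \<longlongrightarrow> \<phi> 0) (at 0 within {0..})" using phi_cont by (simp add: continuous_on_def)
  then have "(\<phi> \<longlongrightarrow> \<phi> 0) (at_right 0)" by (rule tendsto_within_subset) auto
  then have "(\<phi> \<longlongrightarrow> 0) (at_right 0)" by (simp add: phi_0)
  moreover have "(y / C) powr real n > 0" using assms C by simp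
  ultimately have "eventually (\<lambda>s. \<phi> s < (y / C) powr real n) (at_right 0)"
    by (rule order_tendstoD)
  then obtain b where b: "b > 0" "\<And>s. 0 < s \<Longrightarrow> s < b \<Longrightarrow> \<phi> s < (y / C) powr real n"
    unfolding eventually_at_right_field by auto
  define e where "e = min (b/2) 1"
  have e: "0 < e" "e < b" "e \<le> 1" using b by (auto simp: e_def)
  have "\<phi> e powr (1 / real n) < ((y / C) powr real n) powr (1 / real n)"
    using b(2)[OF e(1) e(2)] phi_pos[OF e(1)] n by (intro powr_less_mono2) auto
  also have "\<dots> = y / C" using n assms C by (simp add: powr_powr)
  finally have "C * \<phi> e powr (1 / real n) < y" using C by (simp add: field_simps)
  then show ?thesis using bound[OF e(1) e(3)] e by (intro exI[of _ e]) auto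
qed

lemma J_big: assumes "M > 0" shows "\<exists>s>0. M \<le> J s"
proof -
  define K where "K = M / \<phi> 1 powr (1 / real n)"
  have K: "K > 0" using assms phi_pos[of 1] by (simp add: K_def)
  obtain w0 where w0: "w0 > 0" "\<And>w. 0 < w \<Longrightarrow> w < w0 \<Longrightarrow> K * w powr (1 / real n) \<le> g w"
    using glow[OF K] by auto
  define D where "D = (w0 / \<phi> 1) powr (1 / real n) * g (\<phi> 1)"
  have D: "D > 0" using w0 gpos phi_pos[of 1] by (simp add: D_def)
  define s where "s = max 1 (M / D)"
  have "M / D \<le> s" by (simp add: s_def)
  then have sD: "s * D \<ge> M" using D by (simp add: divide_le_eq)
  have s: "s \<ge> 1" "s > 0" "s * D \<ge> M" using sD by (auto simp: s_def)
  have us: "0 < u s" "u s \<le> u 1" using u_pos s u_anti[of 1 s] by auto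
  have u1: "u 1 = \<phi> 1" by (simp add: u_def)
  show ?thesis
  proof (cases "u s < w0")
    case True
    have "K * u s powr (1 / real n) \<le> g (u s)" using w0(2) us True by auto
    then have "s * (K * u s powr (1 / real n)) \<le> J s" using s by (simp add: J_pos_eq)
    moreover have "s * u s powr (1 / real n) = \<phi> s powr (1 / real n)"
    proof -
      have "u s powr (1 / real n) = \<phi> s powr (1 / real n) / (s ^ n) powr (1 / real n)"
        using phi_pos s by (simp add: u_def powr_divide)
      also have "(s ^ n) powr (1 / real n) = s" using s n by (intro root_pow) auto
      finally show ?thesis using s by simp
    qed
    moreover have "\<phi> 1 powr (1 / real n) \<le> \<phi> s powr (1 / real n)"
      using phi_smono[of 1 s] s phi_pos[of 1] by (cases "s = 1") (auto intro: powr_mono2)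
    ultimately have "K * \<phi> 1 powr (1 / real n) \<le> J s"
      using K by (smt (verit, ccfv_threshold) mult.left_commute mult_left_mono)
    then show ?thesis using s phi_pos[of 1] by (intro exI[of _ s]) (auto simp: K_def)
  next
    case False
    have "g (u 1) \<le> (u 1 / u s) powr (1 / real n) * g (u s)" by (rule gsc2) (use us in auto)
    then have "(u s / u 1) powr (1 / real n) * g (u 1) \<le> g (u s)"
      using us u1 phi_pos[of 1]
      by (simp add: powr_divide field_simps)
    moreover have "(w0 / \<phi> 1) powr (1 / real n) \<le> (u s / u 1) powr (1 / real n)"
      using False w0 u1 phi_pos[of 1] by (intro powr_mono2) (auto simp: divide_right_mono)
    ultimately have "D \<le> g (u s)" unfolding D_def using gpos[of "\<phi> 1"] phi_pos[of 1] u1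
      by (smt (verit) mult_right_mono)
    then have "s * D \<le> J s" using s by (simp add: J_pos_eq)
    then show ?thesis using s by (intro exI[of _ s]) auto
  qed
qed

lemma J_surj: assumes "y \<ge> 0" shows "\<exists>s\<ge>0. J s = y"
proof (cases "y = 0")
  case True then show ?thesis using J_0 by auto
next
  case False
  then have y: "y > 0" using assms by simp
  obtain e where e: "e > 0" "J e < y" using J_small[OF y] by auto
  obtain S where S: "S > 0" "y \<le> J S" using J_big[OF y] by auto
  have "e \<le> S" using e S J_smono[of S e] by force
  have "continuous_on {e..S} J" using J_cont by (rule continuous_on_subset) (use e in auto)
  then obtain x where "e \<le> x" "x \<le> S" "J x = y" using IVT'[of J e y S] e S \<open>e \<le> S\<close> by auto
  then show ?thesis using e by (intro exI[of _ x]) auto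
qed

definition Jinv where "Jinv = the_inv_into {0..} J"

lemma J_inj: "inj_on J {0..}"
  by (rule strict_mono_on_imp_inj_on) (auto simp: strict_mono_on_def J_smono)

lemma Jinv: assumes "y \<ge> 0" shows "Jinv y \<ge> 0" "J (Jinv y) = y"
proof -
  obtain s where "s \<ge> 0" "J s = y" using J_surj[OF assms] by auto
  then have "Jinv y = s" unfolding Jinv_def using J_inj by (auto intro: the_inv_into_f_eq)
  then show "Jinv y \<ge> 0" "J (Jinv y) = y" using \<open>s \<ge> 0\<close> \<open>J s = y\<close> by auto
qed

lemma Jinv_pos: "y > 0 \<Longrightarrow> Jinv y > 0"
  using Jinv[of y] J_0 by (cases "Jinv y = 0") auto

lemma Jinv_mono: assumes "0 \<le> x" "x \<le> y" shows "Jinv x \<le> Jinv y"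
proof (rule ccontr)
  assume "\<not> Jinv x \<le> Jinv y"
  then have "Jinv y < Jinv x" by simp
  moreover have "0 \<le> Jinv y" using Jinv(1) assms by simp
  ultimately have "J (Jinv y) < J (Jinv x)" by (rule J_smono[rotated])
  then show False using Jinv(2)[of x] Jinv(2)[of y] assms by simp
qed

definition psi where "psi y = \<phi> (Jinv y)"

lemma psi_pos: "y > 0 \<Longrightarrow> psi y > 0" using phi_pos Jinv_pos by (simp add: psi_def)

lemma psi_mono: "0 < x \<Longrightarrow> x \<le> y \<Longrightarrow> psi x \<le> psi y"
  unfolding psi_def using Jinv_mono Jinv phi_smono
  by (metis less_eq_real_def order_less_le_trans)

lemma psi_sc:
  assumes l: "1 \<le> l" and y: "0 < y"
  shows "psi (l powr (1 / real n) * y) \<le> l * psi y"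
proof (rule ccontr)
  assume "\<not> ?thesis"
  then have gt: "l * psi y < psi (l powr (1 / real n) * y)" by simp
  define s where "s = Jinv y"
  define s' where "s' = Jinv (l powr (1 / real n) * y)"
  have c1: "1 \<le> l powr (1 / real n)" using l n by (simp add: ge_one_powr_ge_zero)
  have ly: "y \<le> l powr (1 / real n) * y" using c1 y by simp
  have s: "s > 0" "J s = y" using Jinv_pos[OF y] Jinv[of y] y by (auto simp: s_def)
  have s': "J s' = l powr (1 / real n) * y" using Jinv ly y unfolding s'_def by auto
  have ss': "s \<le> s'" unfolding s_def s'_def using Jinv_mono ly y by auto
  have ph: "\<phi> s > 0" using phi_pos s by auto
  have "l < \<phi> s' / \<phi> s" using gt ph by (simp add: psi_def s_def s'_def field_simps)
  then have "l powr (1 / real n) < (\<phi> s' / \<phi> s) powr (1 / real n)"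
    using l n by (intro powr_less_mono2) auto
  then have "l powr (1 / real n) * y < (\<phi> s' / \<phi> s) powr (1 / real n) * J s"
    using s y by simp
  also have "\<dots> \<le> J s'" using J_grow[OF s(1) ss'] .
  finally show False using s' by simp
qed

lemma main: "mono_on {0<..} (\<lambda>r. ereal r * Theta_right psi (real_of_ereal (Theta g (1/r))))"
  by (rule final_step[OF n gpos gmono gsc psi_pos psi_mono psi_sc])

end



locale Bctx =
  fixes n :: nat and B :: "real \<Rightarrow> ereal"
  assumes n: "n \<ge> 1"
    and B0: "B 0 = 0" and Bnn: "\<And>t. t \<ge> 0 \<Longrightarrow> B t \<ge> 0"
    and B2: "\<And>c t. c \<ge> 1 \<Longrightarrow> t \<ge> 0 \<Longrightarrow> ereal (c ^ n) * B t \<le> B (c * t)"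
begin

definition S where "S w = {t. 0 \<le> t \<and> B t \<le> ereal w}"
definition g where "g = young_inv B"
lemma g_def2: "g w = Sup (S w)" by (simp add: g_def young_inv_def S_def)

lemma B_mono: assumes "0 \<le> x" "x \<le> y" shows "B x \<le> B y"
proof (cases "x = 0")
  case True then show ?thesis using B0 Bnn assms by auto
next
  case False
  then have x: "x > 0" using assms by simp
  define c where "c = y / x"
  have c: "c \<ge> 1" using assms x by (simp add: c_def)
  have "B x = 1 * B x" by simp
  also have "\<dots> \<le> ereal (c ^ n) * B x"
    using c Bnn[of x] x by (intro ereal_mult_right_mono) (auto simp: one_ereal_def)
  also have "\<dots> \<le> B (c * x)" using B2 c x by simp
  finally show ?thesis using x by (simp add: c_def)
qed

lemma B_strict: assumes "0 < x" "x < y" "B x = ereal b" "b > 0" shows "B x < B y"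
proof -
  define c where "c = y / x"
  have c: "c > 1" using assms by (simp add: c_def)
  have "1 < c ^ n" using c n by (simp add: one_less_power)
  then have "b < c ^ n * b" using assms by simp
  then have "B x < ereal (c ^ n) * B x" using assms by simp
  also have "\<dots> \<le> B (c * x)" by (rule B2) (use c assms in auto)
  finally show ?thesis using assms by (simp add: c_def)
qed

lemma S_mem0: "w \<ge> 0 \<Longrightarrow> 0 \<in> S w" using B0 by (simp add: S_def zero_ereal_def)

lemma S_ne: "w \<ge> 0 \<Longrightarrow> S w \<noteq> {}" using S_mem0 by auto

lemma S_mono: "w \<le> w' \<Longrightarrow> S w \<subseteq> S w'" unfolding S_def by (auto intro: order_trans)

end

locale Bnd = Bctx +
  assumes nondeg: "\<exists>t\<ge>0. B t > 0"
    and B5: "\<And>\<epsilon>. \<epsilon> > 0 \<Longrightarrow> \<exists>\<delta>>0. \<forall>t. 0 < t \<and> t < \<delta> \<longrightarrow> B t \<le> ereal (\<epsilon> * t ^ n)"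
begin

lemma S_bdd: "bdd_above (S w)"
proof -
  obtain t0 where t0: "t0 \<ge> 0" "B t0 > 0" using nondeg by auto
  have t0p: "t0 > 0" using t0 B0 by (cases "t0 = 0") auto
  show ?thesis
  proof (cases "\<exists>t\<in>S w. t \<ge> t0")
    case False
    then show ?thesis by (intro bdd_aboveI[of _ t0]) auto
  next
    case True
    then obtain t1 where "t1 \<in> S w" "t1 \<ge> t0" by auto
    then have "B t0 \<le> ereal w" using B_mono[of t0 t1] t0 by (auto simp: S_def)
    then obtain b where b: "B t0 = ereal b" using t0 by (cases "B t0") auto
    have bp: "b > 0" using t0 b by simp
    have "t \<le> t0 + t0 * w / b" if "t \<in> S w" for t
    proof (cases "t \<le> t0")
      case True
      moreover have "0 \<le> t0 * w / b"
        using \<open>B t0 \<le> ereal w\<close> b bp t0p by simp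
      ultimately show ?thesis by simp
    next
      case False
      define c where "c = t / t0"
      have c: "c \<ge> 1" using False t0p by (simp add: c_def)
      have "ereal (c ^ n) * B t0 \<le> B (c * t0)" using B2 c t0 by simp
      also have "c * t0 = t" using t0p by (simp add: c_def)
      finally have "ereal (c ^ n) * B t0 \<le> B t" .
      then have "ereal (c ^ n * b) \<le> B t" using b by simp
      moreover have "B t \<le> ereal w" using that by (simp add: S_def)
      ultimately have "ereal (c ^ n * b) \<le> ereal w" by order
      then have "c ^ n * b \<le> w" by simp
      moreover have "c \<le> c ^ n" using c n by (metis One_nat_def power_increasing power_one_right)
      ultimately have "c * b \<le> w" using bp by (smt (verit) mult_right_mono)
      then have "t \<le> t0 * w / b" using bp t0p by (simp add: c_def field_simps)
      then show ?thesis using t0p by simp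
    qed
    then show ?thesis by (intro bdd_aboveI) auto
  qed
qed

lemma g_upper: "t \<in> S w \<Longrightarrow> t \<le> g w" unfolding g_def2 by (rule cSup_upper) (auto simp: S_bdd)
lemma g_least: "w \<ge> 0 \<Longrightarrow> (\<And>t. t \<in> S w \<Longrightarrow> t \<le> M) \<Longrightarrow> g w \<le> M"
  unfolding g_def2 by (rule cSup_least) (auto simp: S_ne)

lemma g_pos: assumes "w > 0" shows "g w > 0"
proof -
  obtain \<delta> where d: "\<delta> > 0" "\<And>t. 0 < t \<and> t < \<delta> \<longrightarrow> B t \<le> ereal (1 * t ^ n)" using B5[of 1] by auto
  define t where "t = min (\<delta>/2) (min 1 w)"
  have t: "0 < t" "t < \<delta>" "t \<le> 1" "t \<le> w" using d assms by (auto simp: t_def)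
  have "t ^ n \<le> t" using t n by (simp add: power_le_one_iff power_decreasing[of 1 n t, simplified])
  then have "B t \<le> ereal w" using d(2)[of t] t by (smt (verit) ereal_less_eq(3) mult_1 order.trans)
  then have "t \<in> S w" using t by (simp add: S_def)
  then show ?thesis using g_upper t by force
qed

lemma g_mono: assumes "0 < x" "x \<le> y" shows "g x \<le> g y"
  unfolding g_def2 by (rule cSup_subset_mono) (use assms S_ne S_bdd S_mono in auto)

lemma g_sc: assumes l: "1 \<le> l" and w: "0 < w" shows "g (l * w) \<le> l powr (1 / real n) * g w"
proof (rule g_least)
  show "0 \<le> l * w" using assms by simp
  define c where "c = l powr (1 / real n)"
  have c: "c \<ge> 1" using l n by (simp add: c_def ge_one_powr_ge_zero)
  have cn: "c ^ n = l" using l n by (simp add: c_def powr_realpow[symmetric] powr_powr)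
  fix t assume t: "t \<in> S (l * w)"
  have "ereal (c ^ n) * B (t / c) \<le> B (c * (t / c))" using B2[of c "t/c"] c t by (simp add: S_def)
  also have "c * (t / c) = t" using c by simp
  finally have "ereal l * B (t / c) \<le> ereal (l * w)" using t cn by (auto simp: S_def)
  then have "B (t / c) \<le> ereal w"
  proof -
    assume h: "ereal l * B (t / c) \<le> ereal (l * w)"
    have "B (t / c) = ereal (1 / l) * (ereal l * B (t / c))"
      using l by (simp add: mult.assoc[symmetric] one_ereal_def[symmetric])
    also have "\<dots> \<le> ereal (1 / l) * ereal (l * w)" using h l by (intro ereal_mult_left_mono) auto
    also have "\<dots> = ereal w" using l by simp
    finally show ?thesis .
  qed
  then have "t / c \<in> S w" using t c by (simp add: S_def)
  then have "t / c \<le> g w" by (rule g_upper)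
  then show "t \<le> l powr (1 / real n) * g w" using c by (simp add: c_def[symmetric] field_simps)
qed

lemma g_low: assumes K: "K > 0" shows "\<exists>w0>0. \<forall>w. 0 < w \<and> w < w0 \<longrightarrow> K * w powr (1 / real n) \<le> g w"
proof -
  define \<epsilon> where "\<epsilon> = 1 / K ^ n"
  have e: "\<epsilon> > 0" using K by (simp add: \<epsilon>_def)
  obtain \<delta> where d: "\<delta> > 0" "\<And>t. 0 < t \<and> t < \<delta> \<longrightarrow> B t \<le> ereal (\<epsilon> * t ^ n)" using B5[OF e] by auto
  show ?thesis
  proof (intro exI[of _ "\<epsilon> * \<delta> ^ n"] conjI allI impI)
    show "0 < \<epsilon> * \<delta> ^ n" using e d by simp
    fix w assume w: "0 < w \<and> w < \<epsilon> * \<delta> ^ n"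
    define t where "t = K * w powr (1 / real n)"
    have tn: "t ^ n = K ^ n * w"
      using w n K by (simp add: t_def power_mult_distrib powr_realpow[symmetric] powr_powr)
    have t0: "t > 0" using K w by (simp add: t_def)
    have "t ^ n < \<delta> ^ n" using tn w e K by (simp add: \<epsilon>_def field_simps)
    then have "t < \<delta>" using t0 d by (meson order_less_imp_le power_less_imp_less_base)
    then have "B t \<le> ereal (\<epsilon> * t ^ n)" using d t0 by auto
    also have "\<epsilon> * t ^ n = w" using tn K by (simp add: \<epsilon>_def)
    finally have "t \<in> S w" using t0 by (simp add: S_def)
    then show "K * w powr (1 / real n) \<le> g w" using g_upper by (simp add: t_def)
  qed
qed

lemma g_cont: "continuous_on {0<..} g"
  unfolding continuous_on_iff
proof (intro ballI allI impI)
  fix w e :: real assume w: "w \<in> {0<..}" and e: "0 < e"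
  define x where "x = g w"
  have x: "x > 0" using g_pos w by (simp add: x_def)
  define e' where "e' = min (e/2) (x/2)"
  have e': "0 < e'" "e' < e" "e' < x" using e x by (auto simp: e'_def)
  define lo where "lo = x - e'"
  define hi where "hi = x + e'"
  have lo: "0 < lo" "lo < x" using e' by (auto simp: lo_def)
  have hi: "x < hi" using e' by (simp add: hi_def)
  have "\<exists>t\<in>S w. lo < t" using lo unfolding x_def g_def2
    by (subst less_cSup_iff[symmetric]) (use S_ne S_bdd w in auto)
  then obtain t where t: "t \<in> S w" "lo < t" by auto
  have Blo: "B lo < ereal w"
  proof -
    have le: "B lo \<le> B t" using B_mono lo t by auto
    also have "\<dots> \<le> ereal w" using t by (simp add: S_def)
    finally have "B lo \<le> ereal w" .
    moreover have "B lo \<noteq> ereal w"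
    proof
      assume eq: "B lo = ereal w"
      then have "B lo < B t" using B_strict[of lo t w] lo t w by auto
      moreover have "B t \<le> ereal w" using t by (simp add: S_def)
      ultimately show False using eq by order
    qed
    ultimately show ?thesis by simp
  qed
  obtain blo where blo: "B lo = ereal blo" using Blo Bnn[of lo] lo by (cases "B lo") auto
  have Bhi: "ereal w < B hi"
  proof (rule ccontr)
    assume "\<not> ereal w < B hi"
    then have "hi \<in> S w" using hi x by (simp add: S_def not_less)
    then have "hi \<le> x" using g_upper by (simp add: x_def)
    then show False using hi by simp
  qed
  obtain d2 where d2: "d2 > 0" "ereal (w + d2) < B hi"
  proof (cases "B hi")
    case (real r)
    then show ?thesis using Bhi by (intro that[of "(r - w)/2"]) (auto simp: field_simps)
  next
    case PInf
    then show ?thesis by (intro that[of 1]) auto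
  next
    case MInf
    then show ?thesis using Bhi by simp
  qed
  define d where "d = min (w - blo) d2"
  have d: "d > 0" using Blo blo d2 by (simp add: d_def)
  show "\<exists>d>0. \<forall>w'\<in>{0<..}. dist w' w < d \<longrightarrow> dist (g w') (g w) < e"
  proof (intro exI[of _ d] conjI ballI impI)
    show "d > 0" by fact
    fix w' :: real assume w': "w' \<in> {0<..}" "dist w' w < d"
    have ww: "w - d < w'" "w' < w + d" using w' by (auto simp: dist_real_def)
    have "lo \<in> S w'" using blo ww lo by (simp add: S_def d_def)
    then have g1: "lo \<le> g w'" by (rule g_upper)
    have g2: "g w' \<le> hi"
    proof (rule g_least)
      show "0 \<le> w'" using w' by simp
      fix t assume t: "t \<in> S w'"
      show "t \<le> hi"
      proof (rule ccontr)
        assume "\<not> t \<le> hi"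
        then have "B hi \<le> B t" using B_mono hi x by simp
        also have "\<dots> \<le> ereal w'" using t by (simp add: S_def)
        also have "\<dots> \<le> ereal (w + d2)" using ww by (simp add: d_def)
        finally show False using d2 by simp
      qed
    qed
    show "dist (g w') (g w) < e" using g1 g2 e' unfolding dist_real_def x_def[symmetric] lo_def hi_def
      by simp
  qed
qed

end



lemma Sup_unbounded_const:
  fixes X :: "real set" assumes "\<not> bdd_above X"
  shows "Sup X = Sup (UNIV :: real set)"
proof -
  have "(\<lambda>z::real. \<forall>x\<in>X. x \<le> z) = (\<lambda>z. \<forall>x\<in>UNIV. x \<le> z)"
  proof (rule ext)
    fix z :: real
    have "\<not> (\<forall>x\<in>X. x \<le> z)" using assms by (auto simp: bdd_above_def)
    moreover have "\<not> (\<forall>x\<in>(UNIV::real set). x \<le> z)" by (auto intro: exI[of _ "z+1"])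
    ultimately show "(\<forall>x\<in>X. x \<le> z) = (\<forall>x\<in>UNIV. x \<le> z)" by blast
  qed
  then show ?thesis unfolding Sup_real_def by simp
qed

lemma x_div_x_nonneg: "(x::real) / x \<ge> 0"
  by (cases "x = 0") auto

context Bctx
begin

lemma Xi_mono:
  assumes gauge: "gauge_fun n \<phi>"
    and B5: "\<And>\<epsilon>. \<epsilon> > 0 \<Longrightarrow> \<exists>\<delta>>0. \<forall>t. 0 < t \<and> t < \<delta> \<longrightarrow> B t \<le> ereal (\<epsilon> * t ^ n)"
  shows "mono_on {0<..} (\<lambda>r. ereal r * Theta_right (\<lambda>y. \<phi> (the_inv_into {0..} (\<lambda>s. if s = 0 then 0 else s * young_inv B (\<phi> s / s ^ n)) y)) (real_of_ereal (Theta (young_inv B) (1 / r))))"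
proof (cases "\<exists>t\<ge>0. B t > 0")
  case True
  interpret Bnd n B using True B5 by unfold_locales auto
  interpret gJ n "young_inv B" \<phi>
  proof unfold_locales
    show "n \<ge> 1" by (rule n)
    show "gauge_fun n \<phi>" by (rule gauge)
    show "\<And>t. t > 0 \<Longrightarrow> young_inv B t > 0" using g_pos by (simp add: g_def)
    show "\<And>x y. 0 < x \<Longrightarrow> x \<le> y \<Longrightarrow> young_inv B x \<le> young_inv B y" using g_mono by (simp add: g_def)
    show "\<And>l w. 1 \<le> l \<Longrightarrow> 0 < w \<Longrightarrow> young_inv B (l * w) \<le> l powr (1 / real n) * young_inv B w"
      using g_sc by (simp add: g_def)
    show "continuous_on {0<..} (young_inv B)" using g_cont by (simp add: g_def)
    show "\<And>K. K > 0 \<Longrightarrow> \<exists>w0>0. \<forall>w. 0 < w \<and> w < w0 \<longrightarrow> K * w powr (1 / real n) \<le> young_inv B w"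
      using g_low by (simp add: g_def)
  qed
  have "(\<lambda>y. \<phi> (the_inv_into {0..} (\<lambda>s. if s = 0 then 0 else s * young_inv B (\<phi> s / s ^ n)) y)) = psi"
    by (rule ext) (simp add: psi_def Jinv_def J_def[abs_def])
  then show ?thesis using main by simp
next
  case False
  then have Bz: "\<And>t. t \<ge> 0 \<Longrightarrow> B t \<le> 0" by (auto simp: not_less)
  define c0 where "c0 = Sup (UNIV :: real set)"
  have gc: "young_inv B w = c0" if "w \<ge> 0" for w
  proof -
    have "{t. 0 \<le> t \<and> B t \<le> ereal w} = {0..}" using Bz that by (force intro: order_trans[OF Bz])
    moreover have "\<not> bdd_above {0::real..}"
    proof
      assume "bdd_above {0::real..}"
      then obtain M where "\<forall>x\<in>{0::real..}. x \<le> M" by (auto simp: bdd_above_def)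
      then have "max 0 M + 1 \<le> M" using bspec[of "{0::real..}" "\<lambda>x. x \<le> M" "max 0 M + 1"] by simp
      then show False by simp
    qed
    ultimately show ?thesis unfolding young_inv_def c0_def using Sup_unbounded_const by metis
  qed
  have upos: "\<phi> s / s ^ n > 0" if "s > 0" for s using gauge that by (auto simp: gauge_fun_def)
  show ?thesis
  proof (cases "c0 > 0")
    case True
    interpret gJ n "young_inv B" \<phi>
    proof unfold_locales
      show "n \<ge> 1" by (rule n)
      show "gauge_fun n \<phi>" by (rule gauge)
      show "\<And>t. t > 0 \<Longrightarrow> young_inv B t > 0" using gc True by simp
      show "\<And>x y. 0 < x \<Longrightarrow> x \<le> y \<Longrightarrow> young_inv B x \<le> young_inv B y" using gc by simp
      show "\<And>l w. 1 \<le> l \<Longrightarrow> 0 < w \<Longrightarrow> young_inv B (l * w) \<le> l powr (1 / real n) * young_inv B w"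
        using gc True n by (simp add: ge_one_powr_ge_zero)
      show "continuous_on {0<..} (young_inv B)"
        by (rule continuous_on_cong[THEN iffD1, OF refl _ continuous_on_const[of _ c0]]) (use gc in auto)
      fix K :: real assume K: "K > 0"
      show "\<exists>w0>0. \<forall>w. 0 < w \<and> w < w0 \<longrightarrow> K * w powr (1 / real n) \<le> young_inv B w"
      proof (intro exI[of _ "(c0 / K) powr real n"] conjI allI impI)
        show "0 < (c0 / K) powr real n" using K True by simp
        fix w assume w: "0 < w \<and> w < (c0 / K) powr real n"
        have "w powr (1 / real n) < ((c0 / K) powr real n) powr (1 / real n)"
          using w n by (intro powr_less_mono2) auto
        also have "\<dots> = c0 / K" using n K True by (simp add: powr_powr)
        finally show "K * w powr (1 / real n) \<le> young_inv B w" using gc w K by (simp add: field_simps)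
      qed
    qed
    have "(\<lambda>y. \<phi> (the_inv_into {0..} (\<lambda>s. if s = 0 then 0 else s * young_inv B (\<phi> s / s ^ n)) y)) = psi"
      by (rule ext) (simp add: psi_def Jinv_def J_def[abs_def])
    then show ?thesis using main by simp
  next
    case False
    define q where "q = c0 / c0"
    have q: "q \<ge> 0" by (simp add: q_def x_div_x_nonneg)
    have Tg: "Theta (young_inv B) \<rho> = ereal q" if "\<rho> > 0" for \<rho>
    proof -
      have "Theta (young_inv B) \<rho> = (SUP t\<in>{0::real<..}. ereal q)"
        unfolding Theta_def q_def by (rule SUP_cong) (auto simp: gc that less_imp_le)
      also have "\<dots> = ereal q" by (rule SUP_const) (auto intro: exI[of _ 1])
      finally show ?thesis .
    qed
    define p0 where "p0 = \<phi> (THE x::real. False)"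
    define Jf where "Jf = (\<lambda>s. if s = 0 then 0 else s * young_inv B (\<phi> s / s ^ n))"
    have psi: "\<phi> (the_inv_into {0..} Jf y) = p0" if "y > 0" for y
    proof -
      have "(\<lambda>x. x \<in> {0..} \<and> Jf x = y) = (\<lambda>x. False)"
      proof (rule ext)
        fix x :: real
        show "(x \<in> {0..} \<and> Jf x = y) = False"
        proof (cases "x = 0")
          case True then show ?thesis using that by (simp add: Jf_def)
        next
          case xn: False
          show ?thesis
          proof (cases "x \<ge> 0")
            case True
            then have "x > 0" using xn by simp
            then have "Jf x = x * c0" using gc upos[of x] by (simp add: Jf_def less_imp_le)
            also have "\<dots> \<le> 0" using \<open>x > 0\<close> False by (simp add: mult_nonneg_nonpos)
            finally show ?thesis using that by auto
          qed auto
        qed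
      qed
      then show ?thesis unfolding the_inv_into_def p0_def by simp
    qed
    define k where "k = p0 / p0"
    have k: "k \<ge> 0" by (simp add: k_def x_div_x_nonneg)
    have Tp: "Theta (\<lambda>y. \<phi> (the_inv_into {0..} Jf y)) \<rho> = ereal k" if "\<rho> > 0" for \<rho>
    proof -
      have "Theta (\<lambda>y. \<phi> (the_inv_into {0..} Jf y)) \<rho> = (SUP t\<in>{0::real<..}. ereal k)"
        unfolding Theta_def k_def by (rule SUP_cong) (auto simp: psi that)
      also have "\<dots> = ereal k" by (rule SUP_const) (auto intro: exI[of _ 1])
      finally show ?thesis .
    qed
    have TR: "Theta_right (\<lambda>y. \<phi> (the_inv_into {0..} Jf y)) q = ereal k"
      unfolding Theta_right_def
    proof (rule tendsto_Lim)
      show "at_right q \<noteq> bot" by simp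
      show "(Theta (\<lambda>y. \<phi> (the_inv_into {0..} Jf y)) \<longlongrightarrow> ereal k) (at_right q)"
        by (rule tendsto_eventually) (use q Tp in \<open>auto simp: eventually_at_right_field intro!: exI[of _ "q+1"]\<close>)
    qed
    have eq: "ereal r * Theta_right (\<lambda>y. \<phi> (the_inv_into {0..} Jf y)) (real_of_ereal (Theta (young_inv B) (1 / r))) = ereal (r * k)"
      if "r > 0" for r
      using Tg[of "1/r"] that TR by simp
    show ?thesis
      unfolding Jf_def[symmetric]
      by (rule mono_onI) (use eq k in \<open>auto intro: mult_right_mono\<close>)
  qed
qed

end



lemma young_A_scale:
  assumes "young_fun A" "c \<ge> 1" "t \<ge> 0"
  shows "c * A t \<le> A (c * t)"
proof -
  have cv: "convex_on {0..} A" and A0: "A 0 = 0" using assms(1) by (auto simp: young_fun_def)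
  have "A ((1 - (1 - 1/c)) *\<^sub>R (c * t) + (1 - 1/c) *\<^sub>R 0) \<le> (1 - (1 - 1/c)) * A (c * t) + (1 - 1/c) * A 0"
    using assms by (intro convex_onD[OF cv]) (auto simp: field_simps)
  then have "A t \<le> (1/c) * A (c * t)" using assms A0 by simp
  then show ?thesis using assms by (simp add: field_simps)
qed

lemma Bctx_n1:
  assumes "young_fun A"
  shows "Bctx 1 (assoc_B 1 A)"
proof unfold_locales
  show "(1::nat) \<ge> 1" by simp
  show "assoc_B 1 A 0 = 0" using assms by (simp add: assoc_B_def young_fun_def)
  show "\<And>t. t \<ge> 0 \<Longrightarrow> assoc_B 1 A t \<ge> 0" using assms by (simp add: assoc_B_def young_fun_def)
  show "\<And>c t. c \<ge> 1 \<Longrightarrow> t \<ge> 0 \<Longrightarrow> ereal (c ^ 1) * assoc_B 1 A t \<le> assoc_B 1 A (c * t)"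
    using young_A_scale[OF assms] by (simp add: assoc_B_def)
qed

lemma B5_n1:
  assumes "cond_C2 A" "cond_C3 1 A" "\<epsilon> > 0"
  shows "\<exists>\<delta>>0. \<forall>t. 0 < t \<and> t < \<delta> \<longrightarrow> assoc_B 1 A t \<le> ereal (\<epsilon> * t ^ 1)"
proof -
  have "filterlim (\<lambda>t. t / A t) at_top (at_right 0)" using assms by (simp add: cond_C3_def)
  then have "eventually (\<lambda>t. 1 / \<epsilon> \<le> t / A t) (at_right 0)" by (simp add: filterlim_at_top)
  then obtain b where b: "b > 0" "\<And>t. 0 < t \<Longrightarrow> t < b \<Longrightarrow> 1 / \<epsilon> \<le> t / A t"
    unfolding eventually_at_right_field by auto
  show ?thesis
  proof (intro exI[of _ b] conjI allI impI)
    show "b > 0" by fact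
    fix t assume t: "0 < t \<and> t < b"
    have At: "A t > 0" using assms t by (simp add: cond_C2_def)
    have "1 / \<epsilon> \<le> t / A t" using b t by auto
    then have "A t \<le> \<epsilon> * t" using At assms by (simp add: field_simps)
    then show "assoc_B 1 A t \<le> ereal (\<epsilon> * t ^ 1)" by (simp add: assoc_B_def)
  qed
qed



locale N2 =
  fixes n :: nat and A :: "real \<Rightarrow> real"
  assumes n2: "n \<ge> 2" and young: "young_fun A" and C2: "cond_C2 A" and C3: "cond_C3 n A"
begin

definition np :: real where "np = real n / (real n - 1)"
definition At :: "real \<Rightarrow> ereal" where "At = young_conj (\<lambda>\<tau>. ereal (A \<tau>))"
definition I :: "real \<Rightarrow> ennreal" where
  "I \<tau> = (\<integral>\<^sup>+ s\<in>{\<tau><..}. e2ennreal (At s) * ennreal (s powr (-1 - np)) \<partial>lborel)"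
definition E :: "real \<Rightarrow> ereal" where "E \<tau> = ereal (\<tau> powr np) * enn2ereal (I \<tau>)"

lemma E_eq: "aux_E n A = E"
  by (rule ext) (simp add: aux_E_def E_def I_def At_def np_def Let_def)

lemma B_eq: "assoc_B n A = young_conj E"
  using n2 by (simp add: assoc_B_def E_eq)

lemma np: "np > 1" using n2 by (simp add: np_def field_simps)

lemma E_nn: "E \<tau> \<ge> 0" unfolding E_def by (simp add: ereal_zero_le_0_iff)
lemma E_0: "E 0 = 0" using np by (simp add: E_def)

lemma B_ge: "\<tau> \<ge> 0 \<Longrightarrow> ereal (\<tau> * t) - E \<tau> \<le> young_conj E t"
  unfolding young_conj_def by (rule SUP_upper) auto

lemma B_nn: "young_conj E t \<ge> 0"
  using B_ge[of 0 t] E_0 by (simp add: zero_ereal_def)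

lemma B_0: "young_conj E 0 = 0"
proof -
  have "young_conj E 0 \<le> 0"
    unfolding young_conj_def
  proof (rule SUP_least)
    fix \<tau> :: real
    show "ereal (\<tau> * 0) - E \<tau> \<le> 0" using E_nn[of \<tau>] by (cases "E \<tau>") auto
  qed
  then show ?thesis using B_nn[of 0] by simp
qed

lemma I_anti: "\<sigma> \<le> \<tau> \<Longrightarrow> I \<tau> \<le> I \<sigma>"
  unfolding I_def by (intro nn_integral_mono) (auto simp: indicator_def)

lemma E_scale:
  assumes c: "c \<ge> 1" and s: "\<sigma> \<ge> 0"
  shows "E (c ^ (n - 1) * \<sigma>) \<le> ereal (c ^ n) * E \<sigma>"
proof -
  have "(c ^ (n - 1) * \<sigma>) powr np = (c ^ (n - 1)) powr np * \<sigma> powr np" by (rule powr_mult)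
  also have "(c ^ (n - 1)) powr np = c ^ n"
  proof -
    have "(c ^ (n - 1)) powr np = (c powr real (n - 1)) powr np" using c by (simp add: powr_realpow)
    also have "\<dots> = c powr (real (n - 1) * np)" by (simp add: powr_powr)
    also have "real (n - 1) * np = real n" using n2 by (simp add: np_def of_nat_diff)
    also have "c powr real n = c ^ n" using c by (simp add: powr_realpow)
    finally show ?thesis .
  qed
  finally have pw: "(c ^ (n - 1) * \<sigma>) powr np = c ^ n * \<sigma> powr np" .
  have "c ^ (n - 1) * \<sigma> \<ge> \<sigma>" using c s by (simp add: mult_le_cancel_right1 one_le_power)
  then have "enn2ereal (I (c ^ (n - 1) * \<sigma>)) \<le> enn2ereal (I \<sigma>)"
    using I_anti by (simp add: less_eq_ennreal.rep_eq[symmetric])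
  then have "ereal (c ^ n * \<sigma> powr np) * enn2ereal (I (c ^ (n - 1) * \<sigma>)) \<le> ereal (c ^ n * \<sigma> powr np) * enn2ereal (I \<sigma>)"
    using c by (intro ereal_mult_left_mono) auto
  moreover have "ereal (c ^ n) * (ereal (\<sigma> powr np) * enn2ereal (I \<sigma>)) = ereal (c ^ n * \<sigma> powr np) * enn2ereal (I \<sigma>)"
    by (metis mult.assoc times_ereal.simps(1))
  ultimately show ?thesis unfolding E_def pw by simp
qed

lemma B_scale:
  assumes c: "c \<ge> 1" and t: "t \<ge> 0"
  shows "ereal (c ^ n) * young_conj E t \<le> young_conj E (c * t)"
proof -
  have cn: "c ^ n > 0" using c by simp
  have "young_conj E t \<le> ereal (1 / c ^ n) * young_conj E (c * t)"
    unfolding young_conj_def[of E t]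
  proof (rule SUP_least)
    fix \<sigma> assume s: "\<sigma> \<in> {0::real..}"
    define \<tau> where "\<tau> = c ^ (n - 1) * \<sigma>"
    have tau: "\<tau> \<ge> 0" using s c by (simp add: \<tau>_def)
    have ct: "\<tau> * (c * t) = c ^ n * (\<sigma> * t)"
      using n2 by (simp add: \<tau>_def power_eq_if)
    have Et: "E \<tau> \<le> ereal (c ^ n) * E \<sigma>" unfolding \<tau>_def by (rule E_scale) (use c s in auto)
    have "ereal (\<sigma> * t) - E \<sigma> \<le> ereal (1 / c ^ n) * (ereal (\<tau> * (c * t)) - E \<tau>)"
    proof (cases "E \<sigma>")
      case (real e)
      obtain e' where e': "E \<tau> = ereal e'" "e' \<le> c ^ n * e"
        using Et E_nn[of \<tau>] real by (cases "E \<tau>") auto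
      have "e' / c ^ n \<le> e" using e' cn by (simp add: divide_le_eq mult.commute)
      moreover have "(1 / c ^ n) * (c ^ n * (\<sigma> * t) - e') = \<sigma> * t - e' / c ^ n"
      proof -
        have "(1 / c ^ n) * (c ^ n * (\<sigma> * t)) = \<sigma> * t" using c by simp
        then show ?thesis by (simp add: right_diff_distrib)
      qed
      ultimately have "\<sigma> * t - e \<le> (1 / c ^ n) * (c ^ n * (\<sigma> * t) - e')" by linarith
      then show ?thesis unfolding ct using real e' by simp
    next
      case PInf then show ?thesis by simp
    next
      case MInf then show ?thesis using E_nn[of \<sigma>] by simp
    qed
    also have "\<dots> \<le> ereal (1 / c ^ n) * young_conj E (c * t)"
      using tau cn by (intro ereal_mult_left_mono B_ge) auto
    finally show "ereal (\<sigma> * t) - E \<sigma> \<le> ereal (1 / c ^ n) * young_conj E (c * t)" .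
  qed
  then have "ereal (c ^ n) * young_conj E t \<le> ereal (c ^ n) * (ereal (1 / c ^ n) * young_conj E (c * t))"
    using cn by (intro ereal_mult_left_mono) auto
  also have "\<dots> = young_conj E (c * t)"
  proof -
    have "ereal (c ^ n) * ereal (1 / c ^ n) = 1" using c by (simp add: one_ereal_def)
    then show ?thesis by (metis mult.assoc mult_1)
  qed
  finally show ?thesis .
qed

lemma Bctx: "Bctx n (assoc_B n A)"
  unfolding B_eq
proof unfold_locales
  show "n \<ge> 1" using n2 by simp
qed (auto simp: B_0 B_nn B_scale)

end



lemma mono_borel_measurable_gen:
  fixes f :: "real \<Rightarrow> 'b::{linorder_topology, second_countable_topology}"
  assumes "mono f"
  shows "f \<in> borel_measurable borel"
proof (rule borel_measurableI_less)
  fix y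
  have "is_interval {x. f x < y}"
    unfolding is_interval_1 using assms by (auto simp: mono_def intro: le_less_trans)
  then show "{x \<in> space borel. f x < y} \<in> sets borel"
    using real_interval_borel_measurable by simp
qed

context N2
begin

definition p :: real where "p = 1 / (real n - 1)"
lemma np_p: "np = 1 + p" using n2 by (simp add: np_def p_def field_simps)
lemma p_pos: "p > 0" using n2 by (simp add: p_def)

lemma A0: "A 0 = 0" and A_nn: "t \<ge> 0 \<Longrightarrow> A t \<ge> 0" and A_conv: "convex_on {0..} A"
  using young by (auto simp: young_fun_def)
lemma A_pos: "t > 0 \<Longrightarrow> A t > 0" using C2 by (simp add: cond_C2_def)

lemma At_ge: "\<sigma> \<ge> 0 \<Longrightarrow> ereal (\<sigma> * s - A \<sigma>) \<le> At s"
  unfolding At_def young_conj_def by (rule SUP_upper2[of \<sigma>]) auto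

lemma At_nn: "At s \<ge> 0" using At_ge[of 0 s] A0 by (simp add: zero_ereal_def)

lemma At_mono: "mono At"
  unfolding At_def young_conj_def mono_def
proof (intro allI impI SUP_mono)
  fix x y :: real and \<sigma> assume "x \<le> y" "\<sigma> \<in> {0::real..}"
  then show "\<exists>m\<in>{0..}. ereal (\<sigma> * x) - ereal (A \<sigma>) \<le> ereal (m * y) - ereal (A m)"
    by (intro bexI[of _ \<sigma>]) (auto intro: mult_left_mono)
qed

lemma At_meas[measurable]: "At \<in> borel_measurable borel"
  by (rule mono_borel_measurable_gen[OF At_mono])

lemma C3_small: assumes m: "m > 0" shows "\<exists>\<sigma>. 0 < \<sigma> \<and> \<sigma> < 1 \<and> A \<sigma> < m * \<sigma>"
proof (rule ccontr)
  assume "\<not> ?thesis"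
  then have h: "\<And>\<sigma>. 0 < \<sigma> \<Longrightarrow> \<sigma> < 1 \<Longrightarrow> m * \<sigma> \<le> A \<sigma>" by (meson not_less)
  have "(\<integral>\<^sup>+ t\<in>{0<..<1}. ennreal ((t / A t) powr (1 / (real n - 1))) \<partial>lborel)
      \<le> (\<integral>\<^sup>+ t. ennreal ((1 / m) powr (1 / (real n - 1))) * indicator {0<..<1::real} t \<partial>lborel)"
  proof (intro nn_integral_mono)
    fix t :: real
    show "ennreal ((t / A t) powr (1 / (real n - 1))) * indicator {0<..<1} t
        \<le> ennreal ((1 / m) powr (1 / (real n - 1))) * indicator {0<..<1} t"
    proof (cases "t \<in> {0<..<1}")
      case True
      then have t: "0 < t" "t < 1" by auto
      have At: "A t > 0" using A_pos t by simp
      have "t / A t \<le> 1 / m" using h[OF t] At m t by (simp add: field_simps)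
      then have "(t / A t) powr (1 / (real n - 1)) \<le> (1 / m) powr (1 / (real n - 1))"
        using t At n2 by (intro powr_mono2) auto
      then show ?thesis using True by (simp add: ennreal_leI)
    qed simp
  qed
  also have "\<dots> = ennreal ((1 / m) powr (1 / (real n - 1))) * emeasure lborel {0::real<..<1}"
    by (rule nn_integral_cmult_indicator) simp
  also have "\<dots> < \<infinity>" by (simp add: ennreal_mult_less_top)
  finally show False using C3 n2 by (simp add: cond_C3_def)
qed

lemma At_lin:
  assumes t1: "\<tau>1 > 0"
  shows "\<exists>\<sigma>1>0. \<forall>\<tau>\<ge>\<tau>1. ereal (\<sigma>1 * \<tau> / 2) \<le> At \<tau>"
proof -
  obtain \<sigma>1 where s: "0 < \<sigma>1" "\<sigma>1 < 1" "A \<sigma>1 < \<tau>1 / 2 * \<sigma>1" using C3_small[of "\<tau>1/2"] t1 by auto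
  show ?thesis
  proof (intro exI[of _ \<sigma>1] conjI allI impI)
    show "\<sigma>1 > 0" by fact
    fix \<tau> assume "\<tau> \<ge> \<tau>1"
    then have "\<sigma>1 * \<tau>1 \<le> \<sigma>1 * \<tau>" using s by (intro mult_left_mono) auto
    moreover have "\<tau>1 / 2 * \<sigma>1 = (\<sigma>1 * \<tau>1) / 2" by simp
    ultimately have "\<sigma>1 * \<tau> / 2 \<le> \<sigma>1 * \<tau> - A \<sigma>1" using s(3) by linarith
    also have "ereal \<dots> \<le> At \<tau>" using At_ge s by simp
    finally show "ereal (\<sigma>1 * \<tau> / 2) \<le> At \<tau>" by simp
  qed
qed

lemma I_lower:
  assumes t: "\<tau> > 0"
  shows "e2ennreal (At \<tau>) * ennreal ((2 * \<tau>) powr (-1 - np) * \<tau>) \<le> I \<tau>"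
proof -
  have "e2ennreal (At \<tau>) * ennreal ((2 * \<tau>) powr (-1 - np) * \<tau>)
      = (\<integral>\<^sup>+ s. (e2ennreal (At \<tau>) * ennreal ((2 * \<tau>) powr (-1 - np))) * indicator {\<tau><..<2*\<tau>} s \<partial>lborel)"
    using t by (subst nn_integral_cmult_indicator) (auto simp: ennreal_mult' mult.assoc)
  also have "\<dots> \<le> I \<tau>"
    unfolding I_def
  proof (intro nn_integral_mono)
    fix s :: real
    show "e2ennreal (At \<tau>) * ennreal ((2 * \<tau>) powr (-1 - np)) * indicator {\<tau><..<2 * \<tau>} s
        \<le> e2ennreal (At s) * ennreal (s powr (-1 - np)) * indicator {\<tau><..} s"
    proof (cases "s \<in> {\<tau><..<2*\<tau>}")
      case True
      then have s: "\<tau> < s" "s < 2 * \<tau>" by auto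
      have "e2ennreal (At \<tau>) \<le> e2ennreal (At s)" using At_mono s by (intro e2ennreal_mono) (auto simp: mono_def)
      moreover have "(2 * \<tau>) powr (-1 - np) \<le> s powr (-1 - np)"
        using s t np by (intro powr_mono2') auto
      ultimately show ?thesis using True s
        by (auto intro!: mult_mono ennreal_leI simp: indicator_def)
    qed simp
  qed
  finally show ?thesis .
qed

lemma E_lower:
  assumes t: "\<tau> > 0"
  shows "ereal (2 powr (-1 - np)) * At \<tau> \<le> E \<tau>"
proof -
  have eq: "\<tau> powr np * ((2 * \<tau>) powr (-1 - np) * \<tau>) = 2 powr (-1 - np)"
  proof -
    have "(2 * \<tau>) powr (-1 - np) = 2 powr (-1 - np) * \<tau> powr (-1 - np)" by (rule powr_mult)
    moreover have "\<tau> powr np * \<tau> powr (-1 - np) * \<tau> = 1"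
    proof -
      have "\<tau> powr np * \<tau> powr (-1 - np) = \<tau> powr (-1)" using t by (simp add: powr_add[symmetric])
      then show ?thesis using t by (simp add: powr_minus field_simps)
    qed
    ultimately show ?thesis by (simp add: field_simps)
  qed
  have c0: "(2 * \<tau>) powr (-1 - np) * \<tau> \<ge> 0" using t by simp
  have "enn2ereal (e2ennreal (At \<tau>) * ennreal ((2 * \<tau>) powr (-1 - np) * \<tau>)) \<le> enn2ereal (I \<tau>)"
    using I_lower[OF t] by (simp add: less_eq_ennreal.rep_eq[symmetric])
  then have "At \<tau> * ereal ((2 * \<tau>) powr (-1 - np) * \<tau>) \<le> enn2ereal (I \<tau>)"
    using c0 At_nn by (simp add: times_ennreal.rep_eq enn2ereal_e2ennreal)
  then have "ereal (\<tau> powr np) * (At \<tau> * ereal ((2 * \<tau>) powr (-1 - np) * \<tau>)) \<le> E \<tau>"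
    unfolding E_def by (intro ereal_mult_left_mono) auto
  moreover have "ereal (\<tau> powr np) * (At \<tau> * ereal ((2 * \<tau>) powr (-1 - np) * \<tau>))
      = ereal (\<tau> powr np * ((2 * \<tau>) powr (-1 - np) * \<tau>)) * At \<tau>"
    by (simp add: ac_simps)
  ultimately show ?thesis unfolding eq by (simp add: mult.commute)
qed

lemma E_lin:
  assumes t1: "\<tau>1 > 0"
  shows "\<exists>\<eta>>0. \<forall>\<tau>\<ge>\<tau>1. ereal (\<eta> * \<tau>) \<le> E \<tau>"
proof -
  obtain \<sigma>1 where s: "\<sigma>1 > 0" "\<And>\<tau>. \<tau> \<ge> \<tau>1 \<Longrightarrow> ereal (\<sigma>1 * \<tau> / 2) \<le> At \<tau>"
    using At_lin[OF t1] by auto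
  show ?thesis
  proof (intro exI[of _ "2 powr (-1 - np) * \<sigma>1 / 2"] conjI allI impI)
    show "0 < 2 powr (-1 - np) * \<sigma>1 / 2" using s by simp
    fix \<tau> assume ta: "\<tau> \<ge> \<tau>1"
    have "ereal (2 powr (-1 - np) * \<sigma>1 / 2 * \<tau>) = ereal (2 powr (-1 - np)) * ereal (\<sigma>1 * \<tau> / 2)" by simp
    also have "\<dots> \<le> ereal (2 powr (-1 - np)) * At \<tau>" using s ta by (intro ereal_mult_left_mono) auto
    also have "\<dots> \<le> E \<tau>" using E_lower ta t1 by simp
    finally show "ereal (2 powr (-1 - np) * \<sigma>1 / 2 * \<tau>) \<le> E \<tau>" .
  qed
qed

definition F :: "real \<Rightarrow> ennreal" where "F s = e2ennreal (At s) * ennreal (s powr (-1 - np))"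

lemma F_meas[measurable]: "F \<in> borel_measurable borel"
  unfolding F_def by measurable

lemma I_F: "I \<tau> = (\<integral>\<^sup>+ s. F s * indicator {\<tau><..} s \<partial>lborel)"
  by (simp add: I_def F_def)

lemma young_aux:
  assumes e: "\<epsilon> > 0" and tau: "\<tau> \<ge> 0" and t: "t \<ge> 0"
  shows "\<tau> * t \<le> \<epsilon> * t ^ n + (1 / ((\<epsilon> * real n) powr (np / real n) * np)) * \<tau> powr np"
proof -
  define K where "K = (\<epsilon> * real n) powr (1 / real n)"
  have K: "K > 0" using e n2 by (simp add: K_def)
  have pq: "1 / real n + 1 / np = 1" using n2 by (simp add: np_def field_simps)
  have "(K * t) * (\<tau> / K) \<le> (K * t) powr real n / real n + (\<tau> / K) powr np / np"
    using n2 np K t tau pq by (intro Youngs_inequality) auto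
  moreover have "(K * t) * (\<tau> / K) = \<tau> * t" using K by simp
  moreover have "(K * t) powr real n / real n = \<epsilon> * t ^ n"
  proof -
    have "(K * t) powr real n = K powr real n * t powr real n" by (rule powr_mult)
    also have "K powr real n = \<epsilon> * real n" using e n2 by (simp add: K_def powr_powr)
    also have "t powr real n = t ^ n"
      using t n2 by (cases "t = 0") (auto simp: powr_realpow)
    finally show ?thesis using n2 by simp
  qed
  moreover have "(\<tau> / K) powr np / np = (1 / ((\<epsilon> * real n) powr (np / real n) * np)) * \<tau> powr np"
  proof -
    have "(\<tau> / K) powr np = \<tau> powr np / K powr np" using tau K by (simp add: powr_divide)
    also have "K powr np = (\<epsilon> * real n) powr (np / real n)" using e n2 by (simp add: K_def powr_powr)
    finally show ?thesis by simp
  qed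
  ultimately show ?thesis by simp
qed

lemma A_cont: "continuous_on {0<..} A"
  by (rule convex_on_continuous) (auto intro: convex_on_subset[OF A_conv] simp: convex_real_interval)

definition aa :: "real \<Rightarrow> real" where "aa \<sigma> = indicator {0<..<1} \<sigma> *\<^sub>R (A \<sigma> / \<sigma>)"

lemma aa_meas[measurable]: "aa \<in> borel_measurable borel"
  unfolding aa_def
proof (rule borel_measurable_continuous_on_indicator)
  show "{0<..<1::real} \<in> sets borel" by simp
  have "continuous_on {0<..<1} A" using A_cont by (rule continuous_on_subset) auto
  then show "continuous_on {0<..<1} (\<lambda>\<sigma>. A \<sigma> / \<sigma>)"
    by (intro continuous_on_divide continuous_on_id) auto
qed

lemma aa_eq: "\<sigma> \<in> {0<..<1} \<Longrightarrow> aa \<sigma> = A \<sigma> / \<sigma>" by (simp add: aa_def)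
lemma aa_pos: "\<sigma> \<in> {0<..<1} \<Longrightarrow> aa \<sigma> > 0" using A_pos by (simp add: aa_def)

definition G :: "real \<Rightarrow> real \<Rightarrow> ennreal" where
  "G \<sigma> v = (if \<sigma> \<in> {0<..<1} \<and> aa \<sigma> < v \<and> v < 2 * aa \<sigma> then ennreal (2 powr np * v powr (-np)) else 0)"

lemma G_meas: "case_prod G \<in> borel_measurable (lborel \<Otimes>\<^sub>M lborel)"
  unfolding G_def by measurable

lemma step1:
  "ennreal ((\<sigma> / A \<sigma>) powr (1 / (real n - 1))) * indicator {0<..<1} \<sigma> \<le> (\<integral>\<^sup>+ v. G \<sigma> v \<partial>lborel)"
proof (cases "\<sigma> \<in> {0<..<1}")
  case False then show ?thesis by simp
next
  case True
  define a where "a = A \<sigma> / \<sigma>"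
  have a: "a > 0" "aa \<sigma> = a" using aa_pos[OF True] aa_eq[OF True] by (auto simp: a_def)
  have "\<sigma> / A \<sigma> = 1 / a" by (simp add: a_def)
  then have "(\<sigma> / A \<sigma>) powr (1 / (real n - 1)) = (1 / a) powr p" by (simp add: p_def)
  also have "\<dots> = 1 / a powr p" using a by (simp add: powr_divide)
  also have "\<dots> = a powr (-p)" by (rule powr_minus_divide[symmetric])
  finally have "(\<sigma> / A \<sigma>) powr (1 / (real n - 1)) = a powr (-p)" .
  also have "\<dots> = 2 powr np * (2 * a) powr (-np) * a"
  proof -
    have "(2 * a) powr (-np) = 2 powr (-np) * a powr (-np)" by (rule powr_mult)
    moreover have "2 powr np * 2 powr (-np) = (1::real)" by (simp add: powr_add[symmetric])
    moreover have "a powr (-np) * a = a powr (-p)"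
    proof -
      have "a powr (-np) * a = a powr (-np) * a powr 1" using a by simp
      also have "\<dots> = a powr (-np + 1)" by (rule powr_add[symmetric])
      also have "-np + 1 = -p" by (simp add: np_p)
      finally show ?thesis .
    qed
    ultimately show ?thesis by (simp add: algebra_simps)
  qed
  finally have eq: "(\<sigma> / A \<sigma>) powr (1 / (real n - 1)) = 2 powr np * (2 * a) powr (-np) * a" .
  have "ennreal ((\<sigma> / A \<sigma>) powr (1 / (real n - 1))) * indicator {0<..<1} \<sigma>
      = (\<integral>\<^sup>+ v. ennreal (2 powr np * (2 * a) powr (-np)) * indicator {a<..<2*a} v \<partial>lborel)"
    using True a by (subst nn_integral_cmult_indicator) (auto simp: eq ennreal_mult')
  also have "\<dots> \<le> (\<integral>\<^sup>+ v. G \<sigma> v \<partial>lborel)"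
  proof (intro nn_integral_mono)
    fix v :: real
    show "ennreal (2 powr np * (2 * a) powr (-np)) * indicator {a<..<2*a} v \<le> G \<sigma> v"
    proof (cases "v \<in> {a<..<2*a}")
      case True
      have "(2 * a) powr (-np) \<le> v powr (-np)" using True a np by (intro powr_mono2') auto
      then show ?thesis using True \<open>\<sigma> \<in> {0<..<1}\<close> a
        by (auto simp: G_def intro!: ennreal_leI mult_left_mono)
    qed simp
  qed
  finally show ?thesis .
qed

definition H :: "real \<Rightarrow> ennreal" where
  "H v = ennreal (2 powr np) * (indicator {0<..<1} v * ennreal (v powr (-1 - np)) * e2ennreal (At (2 * v))
      + ennreal (v powr (-np)) * indicator {1..} v)"

lemma step3: "(\<integral>\<^sup>+ \<sigma>. G \<sigma> v \<partial>lborel) \<le> H v"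
proof -
  define Sv where "Sv = {\<sigma>. \<sigma> \<in> {0<..<1} \<and> aa \<sigma> < v \<and> v < 2 * aa \<sigma>}"
  have Sv_meas: "Sv \<in> sets lborel" unfolding Sv_def by measurable
  have "(\<integral>\<^sup>+ \<sigma>. G \<sigma> v \<partial>lborel) = (\<integral>\<^sup>+ \<sigma>. ennreal (2 powr np * v powr (-np)) * indicator Sv \<sigma> \<partial>lborel)"
    by (intro nn_integral_cong) (auto simp: G_def Sv_def indicator_def)
  also have "\<dots> = ennreal (2 powr np * v powr (-np)) * emeasure lborel Sv"
    using Sv_meas by (rule nn_integral_cmult_indicator)
  also have "\<dots> \<le> H v"
  proof (cases "v > 0")
    case False
    have "Sv = {}" using False aa_pos by (force simp: Sv_def)
    then show ?thesis by simp
  next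
    case vpos: True
    show ?thesis
    proof (cases "v < 1")
      case True
      have meas: "emeasure lborel Sv \<le> ennreal (1 / v) * e2ennreal (At (2 * v))"
      proof (cases "At (2 * v)")
        case (real r)
        have r0: "r \<ge> 0" using At_nn[of "2 * v"] real by simp
        have "Sv \<subseteq> {0<..<r / v}"
        proof
          fix \<sigma> assume s: "\<sigma> \<in> Sv"
          then have s1: "\<sigma> \<in> {0<..<1}" "A \<sigma> / \<sigma> < v" using aa_eq by (auto simp: Sv_def)
          then have "A \<sigma> < v * \<sigma>" by (simp add: divide_less_eq)
          moreover have "ereal (\<sigma> * (2 * v) - A \<sigma>) \<le> At (2 * v)" using At_ge s1 by simp
          ultimately have "\<sigma> * (2 * v) - A \<sigma> \<le> r" "A \<sigma> < v * \<sigma>" using real by simp_all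
          moreover have "\<sigma> * (2 * v) = 2 * (v * \<sigma>)" by simp
          ultimately have "v * \<sigma> < r" by linarith
          then show "\<sigma> \<in> {0<..<r / v}" using s1 vpos by (simp add: field_simps)
        qed
        then have "emeasure lborel Sv \<le> emeasure lborel {0<..<r / v}" by (intro emeasure_mono) auto
        also have "\<dots> = ennreal (r / v)" using r0 vpos by simp
        also have "\<dots> = ennreal (1 / v) * e2ennreal (At (2 * v))"
          using real r0 vpos by (simp add: ennreal_mult'[symmetric])
        finally show ?thesis .
      next
        case PInf
        then show ?thesis using vpos by (simp add: ennreal_mult_top)
      next
        case MInf
        then show ?thesis using At_nn[of "2 * v"] by simp
      qed
      have "ennreal (2 powr np * v powr (-np)) * emeasure lborel Sv
          \<le> ennreal (2 powr np * v powr (-np)) * (ennreal (1 / v) * e2ennreal (At (2 * v)))"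
        by (intro mult_left_mono meas) auto
      also have "\<dots> = ennreal (2 powr np) * (ennreal (v powr (-1 - np)) * e2ennreal (At (2 * v)))"
      proof -
        have "v powr (-np) * (1 / v) = v powr (-1 - np)"
          using vpos by (simp add: powr_diff powr_minus field_simps)
        then have e1: "2 powr np * v powr (-np) * (1 / v) = 2 powr np * v powr (-1 - np)" by (metis mult.assoc)
        have "ennreal (2 powr np * v powr (-np)) * ennreal (1 / v) = ennreal (2 powr np * v powr (-np) * (1 / v))"
          by (rule ennreal_mult[symmetric]) (use vpos in auto)
        also have "\<dots> = ennreal (2 powr np) * ennreal (v powr (-1 - np))"
          unfolding e1 by (rule ennreal_mult) auto
        finally have "ennreal (2 powr np * v powr (-np)) * ennreal (1 / v) = ennreal (2 powr np) * ennreal (v powr (-1 - np))" .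
        then show ?thesis by (metis mult.assoc)
      qed
      also have "\<dots> = H v" using True vpos by (simp add: H_def)
      finally show ?thesis .
    next
      case False
      have "emeasure lborel Sv \<le> emeasure lborel {0<..<1::real}" by (intro emeasure_mono) (auto simp: Sv_def)
      then have "emeasure lborel Sv \<le> 1" by simp
      then have "ennreal (2 powr np * v powr (-np)) * emeasure lborel Sv \<le> ennreal (2 powr np * v powr (-np)) * 1"
        by (intro mult_left_mono) auto
      also have "\<dots> = H v" using False vpos by (simp add: H_def ennreal_mult')
      finally show ?thesis .
    qed
  qed
  finally show ?thesis .
qed

lemma P2_fin: "(\<integral>\<^sup>+ v. ennreal (v powr (-np)) * indicator {1..} v \<partial>lborel) < \<infinity>"
proof -
  have "(\<integral>\<^sup>+ v. ennreal (v powr (-np)) * indicator {1..} v \<partial>lborel) = ennreal (0 - (- (1 powr (1 - np)) / (np - 1)))"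
  proof (rule nn_integral_FTC_atLeast[where F="\<lambda>v. - (v powr (1 - np)) / (np - 1)" and T=0])
    show "(\<lambda>v. v powr (-np)) \<in> borel_measurable borel" by measurable
    fix x :: real assume x: "1 \<le> x"
    have "((\<lambda>v. v powr (1 - np)) has_real_derivative (1 - np) * x powr (1 - np - 1)) (at x)"
      using x by (intro has_real_derivative_powr) auto
    then have "((\<lambda>v. - (v powr (1 - np)) / (np - 1)) has_real_derivative - ((1 - np) * x powr (1 - np - 1)) / (np - 1)) (at x)"
      by (intro DERIV_cdivide DERIV_minus)
    moreover have "- ((1 - np) * x powr (1 - np - 1)) / (np - 1) = x powr (-np)" using np by (simp add: field_simps)
    ultimately show "((\<lambda>v. - (v powr (1 - np)) / (np - 1)) has_real_derivative x powr (-np)) (at x)" by simp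
    show "0 \<le> x powr (-np)" by simp
  next
    have "((\<lambda>v. v powr (1 - np)) \<longlongrightarrow> 0) at_top"
      using np by (intro tendsto_neg_powr filterlim_ident) auto
    then have "((\<lambda>v. - (v powr (1 - np))) \<longlongrightarrow> 0) at_top" using tendsto_minus by fastforce
    then show "((\<lambda>v. - (v powr (1 - np)) / (np - 1)) \<longlongrightarrow> 0) at_top"
      by (rule tendsto_divide_zero)
  qed
  then show ?thesis by simp
qed

lemma P1_fin:
  assumes fin: "(\<integral>\<^sup>+ s. F s * indicator {0<..} s \<partial>lborel) < \<infinity>"
  shows "(\<integral>\<^sup>+ v. indicator {0<..<1} v * ennreal (v powr (-1 - np)) * e2ennreal (At (2 * v)) \<partial>lborel) < \<infinity>"
proof -
  define g where "g s = F s * indicator {0<..<2} s" for s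
  have gm: "g \<in> borel_measurable borel" unfolding g_def by measurable
  have "(\<integral>\<^sup>+ s. g s \<partial>lborel) \<le> (\<integral>\<^sup>+ s. F s * indicator {0<..} s \<partial>lborel)"
    unfolding g_def by (intro nn_integral_mono) (auto simp: indicator_def)
  then have gfin: "(\<integral>\<^sup>+ s. g s \<partial>lborel) < \<infinity>" using fin by simp
  have "(\<integral>\<^sup>+ s. g s \<partial>lborel) = ennreal 2 * (\<integral>\<^sup>+ x. g (0 + 2 * x) \<partial>lborel)"
    using nn_integral_real_affine[OF gm, of 2 0] by simp
  also have "(\<integral>\<^sup>+ x. g (0 + 2 * x) \<partial>lborel)
      = (\<integral>\<^sup>+ x. ennreal (2 powr (-1 - np)) * (indicator {0<..<1} x * ennreal (x powr (-1 - np)) * e2ennreal (At (2 * x))) \<partial>lborel)"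
  proof (intro nn_integral_cong)
    fix x :: real
    show "g (0 + 2 * x) = ennreal (2 powr (-1 - np)) * (indicator {0<..<1} x * ennreal (x powr (-1 - np)) * e2ennreal (At (2 * x)))"
    proof (cases "x \<in> {0<..<1}")
      case True
      have "(2 * x) powr (-1 - np) = 2 powr (-1 - np) * x powr (-1 - np)" by (rule powr_mult)
      then show ?thesis using True
        by (simp add: g_def F_def indicator_def ennreal_mult' mult_ac)
    next
      case False
      then have "2 * x \<notin> {0<..<2}" by auto
      then show ?thesis using False by (simp add: g_def)
    qed
  qed
  also have "\<dots> = ennreal (2 powr (-1 - np)) * (\<integral>\<^sup>+ x. indicator {0<..<1} x * ennreal (x powr (-1 - np)) * e2ennreal (At (2 * x)) \<partial>lborel)"
    by (rule nn_integral_cmult) measurable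
  finally have "ennreal 2 * (ennreal (2 powr (-1 - np)) * (\<integral>\<^sup>+ x. indicator {0<..<1} x * ennreal (x powr (-1 - np)) * e2ennreal (At (2 * x)) \<partial>lborel)) < \<infinity>"
    using gfin by simp
  then have "(\<integral>\<^sup>+ x. indicator {0<..<1} x * ennreal (x powr (-1 - np)) * e2ennreal (At (2 * x)) \<partial>lborel) = 0
     \<or> (\<integral>\<^sup>+ x. indicator {0<..<1} x * ennreal (x powr (-1 - np)) * e2ennreal (At (2 * x)) \<partial>lborel) < top"
    by (simp add: ennreal_mult_less_top)
  then show ?thesis by (metis ennreal_zero_less_top infinity_ennreal_def)
qed

lemma tonelli_contra:
  assumes fin: "(\<integral>\<^sup>+ s. F s * indicator {0<..} s \<partial>lborel) < \<infinity>"
  shows False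
proof -
  have "\<infinity> = (\<integral>\<^sup>+ \<sigma>. ennreal ((\<sigma> / A \<sigma>) powr (1 / (real n - 1))) * indicator {0<..<1} \<sigma> \<partial>lborel)"
    using C3 n2 by (simp add: cond_C3_def)
  also have "\<dots> \<le> (\<integral>\<^sup>+ \<sigma>. (\<integral>\<^sup>+ v. G \<sigma> v \<partial>lborel) \<partial>lborel)"
    by (intro nn_integral_mono step1)
  also have "\<dots> = (\<integral>\<^sup>+ v. (\<integral>\<^sup>+ \<sigma>. G \<sigma> v \<partial>lborel) \<partial>lborel)"
    by (rule lborel_pair.Fubini'[symmetric]) (rule G_meas)
  also have "\<dots> \<le> (\<integral>\<^sup>+ v. H v \<partial>lborel)"
    by (intro nn_integral_mono step3)
  also have "\<dots> = ennreal (2 powr np) * ((\<integral>\<^sup>+ v. indicator {0<..<1} v * ennreal (v powr (-1 - np)) * e2ennreal (At (2 * v)) \<partial>lborel)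
      + (\<integral>\<^sup>+ v. ennreal (v powr (-np)) * indicator {1..} v \<partial>lborel))"
  proof -
    have m1: "(\<lambda>v. indicator {0<..<1} v * ennreal (v powr (-1 - np)) * e2ennreal (At (2 * v))) \<in> borel_measurable lborel"
      by measurable
    have m2: "(\<lambda>v::real. ennreal (v powr (-np)) * indicator {1..} v) \<in> borel_measurable lborel"
      by measurable
    have m3: "(\<lambda>v. indicator {0<..<1} v * ennreal (v powr (-1 - np)) * e2ennreal (At (2 * v)) + ennreal (v powr (-np)) * indicator {1..} v) \<in> borel_measurable lborel"
      using m1 m2 by (rule borel_measurable_add)
    have "(\<integral>\<^sup>+ v. H v \<partial>lborel) = ennreal (2 powr np) * (\<integral>\<^sup>+ v. indicator {0<..<1} v * ennreal (v powr (-1 - np)) * e2ennreal (At (2 * v)) + ennreal (v powr (-np)) * indicator {1..} v \<partial>lborel)"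
      unfolding H_def using m3 by (rule nn_integral_cmult)
    also have "(\<integral>\<^sup>+ v. indicator {0<..<1} v * ennreal (v powr (-1 - np)) * e2ennreal (At (2 * v)) + ennreal (v powr (-np)) * indicator {1..} v \<partial>lborel)
        = (\<integral>\<^sup>+ v. indicator {0<..<1} v * ennreal (v powr (-1 - np)) * e2ennreal (At (2 * v)) \<partial>lborel)
      + (\<integral>\<^sup>+ v. ennreal (v powr (-np)) * indicator {1..} v \<partial>lborel)"
      using m1 m2 by (rule nn_integral_add)
    finally show ?thesis .
  qed
  also have "\<dots> < \<infinity>"
    using P1_fin[OF fin] P2_fin by (simp add: ennreal_mult_less_top)
  finally show False by simp
qed

lemma B5_contra:
  assumes e: "\<epsilon> > 0" and allB: "\<And>t. t > 0 \<Longrightarrow> ereal (\<epsilon> * t ^ n) < young_conj E t"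
  shows False
proof -
  define Ce where "Ce = 1 / ((\<epsilon> * real n) powr (np / real n) * np)"
  have Ce: "Ce > 0" using e n2 np by (simp add: Ce_def)
  have e3: "\<exists>\<tau>>0. E \<tau> < ereal (\<tau> * t) \<and> I \<tau> < ennreal Ce" if t: "t > 0" for t
  proof -
    have "ereal (\<epsilon> * t ^ n) < young_conj E t" using allB t by simp
    then obtain \<tau> where tau: "\<tau> \<ge> 0" "ereal (\<epsilon> * t ^ n) < ereal (\<tau> * t) - E \<tau>"
      unfolding young_conj_def less_SUP_iff by auto
    obtain e where Ee: "E \<tau> = ereal e" using tau(2) E_nn[of \<tau>] by (cases "E \<tau>") auto
    have e0: "e \<ge> 0" using E_nn[of \<tau>] Ee by simp
    have lt: "\<epsilon> * t ^ n < \<tau> * t - e" using tau Ee by simp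
    have etn: "\<epsilon> * t ^ n > 0" using e t by simp
    have tp: "\<tau> > 0"
    proof (rule ccontr)
      assume "\<not> \<tau> > 0"
      then have "\<tau> = 0" using tau by simp
      then show False using lt e0 etn by simp
    qed
    have Et: "E \<tau> < ereal (\<tau> * t)" using lt etn Ee by simp
    have "e < Ce * \<tau> powr np"
      using lt young_aux[OF e tau(1) less_imp_le[OF t]] by (simp add: Ce_def)
    then have lt2: "ereal (\<tau> powr np) * enn2ereal (I \<tau>) < ereal (\<tau> powr np) * ereal Ce"
      using Ee by (simp add: E_def mult.commute)
    have "enn2ereal (I \<tau>) < ereal Ce"
    proof (rule ccontr)
      assume "\<not> enn2ereal (I \<tau>) < ereal Ce"
      then have "ereal Ce \<le> enn2ereal (I \<tau>)" by simp
      then have "ereal (\<tau> powr np) * ereal Ce \<le> ereal (\<tau> powr np) * enn2ereal (I \<tau>)"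
        by (intro ereal_mult_left_mono) auto
      then show False using lt2 by simp
    qed
    then have "I \<tau> < ennreal Ce" using Ce by (simp add: less_ennreal.rep_eq)
    then show ?thesis using tp Et by auto
  qed
  have e4: "I \<tau>1 \<le> ennreal Ce" if t1: "\<tau>1 > 0" for \<tau>1
  proof -
    obtain \<eta> where eta: "\<eta> > 0" "\<And>\<tau>. \<tau> \<ge> \<tau>1 \<Longrightarrow> ereal (\<eta> * \<tau>) \<le> E \<tau>" using E_lin[OF t1] by auto
    obtain \<tau> where tau: "\<tau> > 0" "E \<tau> < ereal (\<tau> * (\<eta> / 2))" "I \<tau> < ennreal Ce"
      using e3[of "\<eta>/2"] eta by auto
    have "\<tau> < \<tau>1"
    proof (rule ccontr)
      assume "\<not> \<tau> < \<tau>1"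
      then have "\<tau> \<ge> \<tau>1" by simp
      then have "ereal (\<eta> * \<tau>) \<le> E \<tau>" by (rule eta(2))
      then have "ereal (\<eta> * \<tau>) < ereal (\<tau> * (\<eta> / 2))" using tau(2) by (rule le_less_trans)
      then show False using tau eta by (simp add: field_simps)
    qed
    then have "I \<tau>1 \<le> I \<tau>" by (intro I_anti) simp
    then show ?thesis using tau by simp
  qed
  define f where "f k s = F s * indicator {1 / Suc k<..} s" for k :: nat and s :: real
  have inc: "incseq f"
    unfolding incseq_def f_def le_fun_def
  proof (intro allI impI)
    fix m k :: nat and s :: real assume "m \<le> k"
    then have "1 / real (Suc k) \<le> 1 / real (Suc m)" by (simp add: frac_le)
    then show "F s * indicator {1 / Suc m<..} s \<le> F s * indicator {1 / Suc k<..} s"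
      by (auto simp: indicator_def)
  qed
  have sup: "(SUP k. f k s) = F s * indicator {0<..} s" for s
  proof (cases "s > 0")
    case True
    obtain k0 :: nat where k0: "1 / real (Suc k0) < s" using True
      by (metis reals_Archimedean inverse_eq_divide of_nat_Suc)
    show ?thesis
    proof (rule antisym)
      show "(SUP k. f k s) \<le> F s * indicator {0<..} s"
        by (rule SUP_least) (use True in \<open>auto simp: f_def indicator_def\<close>)
      show "F s * indicator {0<..} s \<le> (SUP k. f k s)"
        by (rule SUP_upper2[of k0]) (use True k0 in \<open>auto simp: f_def indicator_def\<close>)
    qed
  next
    case False
    have "f k s = 0" for k
    proof -
      have "0 < 1 / real (Suc k)" by simp
      then have "\<not> (1 / real (Suc k) < s)" using False by linarith
      then have "s \<notin> {1 / Suc k<..}" by simp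
      then show ?thesis by (simp add: f_def)
    qed
    then show ?thesis using False by simp
  qed
  have "(\<integral>\<^sup>+ s. F s * indicator {0<..} s \<partial>lborel) = (\<integral>\<^sup>+ s. (SUP k. f k s) \<partial>lborel)"
    by (simp add: sup)
  also have "\<dots> = (SUP k. integral\<^sup>N lborel (f k))"
    by (rule nn_integral_monotone_convergence_SUP[OF inc]) (unfold f_def, measurable)
  also have "\<dots> \<le> ennreal Ce"
  proof (rule SUP_least)
    fix k :: nat
    have "integral\<^sup>N lborel (f k) = I (1 / Suc k)" unfolding I_F f_def[abs_def] ..
    also have "\<dots> \<le> ennreal Ce" by (rule e4) simp
    finally show "integral\<^sup>N lborel (f k) \<le> ennreal Ce" .
  qed
  also have "\<dots> < \<infinity>" by simp
  finally show False by (rule tonelli_contra)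
qed

lemma B5: assumes e: "\<epsilon> > 0" shows "\<exists>\<delta>>0. \<forall>t. 0 < t \<and> t < \<delta> \<longrightarrow> assoc_B n A t \<le> ereal (\<epsilon> * t ^ n)"
proof (rule ccontr)
  assume neg: "\<not> ?thesis"
  have "ereal (\<epsilon> * t ^ n) < young_conj E t" if t: "t > 0" for t
  proof -
    obtain t1 where t1: "0 < t1" "t1 < t" "\<not> young_conj E t1 \<le> ereal (\<epsilon> * t1 ^ n)"
      using neg t unfolding B_eq by auto
    define c where "c = t / t1"
    have c: "c \<ge> 1" "c > 0" using t1 by (auto simp: c_def)
    have ct: "c * t1 = t" using t1 by (simp add: c_def)
    have cn: "c ^ n * (\<epsilon> * t1 ^ n) = \<epsilon> * t ^ n" using ct by (metis mult.left_commute power_mult_distrib)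
    have sc: "ereal (c ^ n) * young_conj E t1 \<le> young_conj E t"
      using B_scale[of c t1] c t1 ct by simp
    have "ereal (\<epsilon> * t ^ n) < ereal (c ^ n) * young_conj E t1"
    proof (cases "young_conj E t1")
      case (real b)
      then have "\<epsilon> * t1 ^ n < b" using t1 by simp
      then have "c ^ n * (\<epsilon> * t1 ^ n) < c ^ n * b" using c by simp
      then show ?thesis using real cn by simp
    next
      case PInf then show ?thesis using c by simp
    next
      case MInf then show ?thesis using B_nn[of t1] by simp
    qed
    then show ?thesis using sc by simp
  qed
  then show False using B5_contra[OF e] by blast
qed
end


theorem lemma4p9:
  fixes n :: nat and A \<phi> :: "real \<Rightarrow> real"
  assumes "n \<ge> 1"
    and "young_fun A" and "cond_C1 n A" and "cond_C2 A" and "cond_C3 n A"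
    and "gauge_fun n \<phi>"
  shows "mono_on {0<..} (Xi n A \<phi>)"
proof -
  have Xi_eq: "Xi n A \<phi> = (\<lambda>r. ereal r * Theta_right (\<lambda>y. \<phi> (the_inv_into {0..} (\<lambda>s. if s = 0 then 0 else s * young_inv (assoc_B n A) (\<phi> s / s ^ n)) y)) (real_of_ereal (Theta (young_inv (assoc_B n A)) (1 / r))))"
    by (rule ext) (simp add: Xi_def assoc_psi_def[abs_def] J_fun_def[abs_def])
  show ?thesis
  proof (cases "n = 1")
    case True
    interpret Bctx 1 "assoc_B 1 A" by (rule Bctx_n1) (use assms in auto)
    show ?thesis unfolding Xi_eq unfolding True
      by (intro Xi_mono) (use assms True B5_n1 in auto)
  next
    case False
    interpret N2 n A by unfold_locales (use assms False in auto)
    interpret Bctx n "assoc_B n A" by (rule Bctx)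
    show ?thesis unfolding Xi_eq
      by (intro Xi_mono) (use assms B5 in auto)
  qed
qed


end
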